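(* Let $\mathcal C$ be a Markov category with conditionals and precise supports, in which there exist a state $\mu$ and a deterministic state $o$ with $o\not\ll\mu$. Then the states $I\leadsto X$ of $\mathrm{Cond}(\mathcal C)$ are as follows: (1) all $(K,\psi,o)$ with $o\not\ll\psi_K$ are equal in $\mathrm{Cond}(\mathcal C)$, defining a unique failure state $\bot_X$; (2) if $o\ll\psi_K$, then $(K,\psi,o)=J(\psi|_K\,o)$ in $\mathrm{Cond}(\mathcal C)$, where $\psi|_K:K\to X$ is any conditional of $\psi$ with respect to $K$; (3) failure is strict: any composite with, or tensor with, a failure state is a failure state; (4) the only morphisms $I\leadsto I$ in $\mathrm{Cond}(\mathcal C)$ are $\mathrm{Id}_I$ and $\bot_I$; both are copyable, but $\bot_I$ is not discardable.
   Context: A Markov category is a symmetric monoidal category $(\mathcal C,\otimes,I)$ (assumed strict) in which every object $X$ carries a commutative comonoid $\mathrm{copy}_X$, $\mathrm{del}_X$ compatible with $\otimes$, and $I$ is terminal. A morphism $f$ is deterministic if $\mathrm{copy}_Y f=(f\otimes f)\mathrm{copy}_X$ (in a CD category, copyable means this equation and discardable means $\mathrm{del}_Y f=\mathrm{del}_X$). $\langle f,g\rangle=(f\otimes g)\mathrm{copy}_A$; marginals $f_X=(\mathrm{id}_X\otimes\mathrm{del}_Y)f$, $f_Y=(\mathrm{del}_X\otimes\mathrm{id}_Y)f$. A conditional of $f:A\to X\otimes Y$ w.r.t. $X$ is $f|_X:X\otimes A\to Y$ with $f=(\mathrm{id}_X\otimes f|_X)(\mathrm{copy}_X\otimes\mathrm{id}_A)(f_X\otimes\mathrm{id}_A)\mathrm{copy}_A$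 (symmetrically w.r.t. $Y$); $\mathcal C$ has conditionals if these always exist. $f=_\mu g$ means $\langle\mathrm{id},f\rangle\mu=\langle\mathrm{id},g\rangle\mu$; $\mu\ll\nu$ means $f=_\nu g\Rightarrow f=_\mu g$ for all $f,g$. Precise supports: for deterministic $x:I\to X$, $y:I\to Y$, any $f:X\to Y$, $\mu:I\to X$: $x\otimes y\ll\langle\mathrm{id}_X,f\rangle\mu$ iff ($x\ll\mu$ and $y\ll fx$). $\mathrm{Obs}(\mathcal C)$: same objects as $\mathcal C$; morphisms $X\leadsto Y$ are triples $(K,f,o)$, $f:X\to Y\otimes K$, $o:I\to K$ deterministic; identity $\mathrm{Id}_X=(I,\mathrm{id}_X,\mathrm{id}_I)$; composition $(K',f',o')\bullet(K,f,o)=(K'\otimes K,(f'\otimes\mathrm{id}_K)f,o'\otimes o)$; tensor of $(K,f,o):X\leadsto Y$, $(K',f',o'):X'\leadsto Y'$ is $(K'\otimes K,(\mathrm{id}_{Y'}\otimes\mathrm{swap}_{K',Y}\otimes\mathrm{id}_K)(f'\otimes f),o'\otimes o)$; $J(f)=(I,f,\mathrm{id}_I)$; copy and delete of $\mathrm{Obs}(\mathcal C)$ are $J(\mathrm{copy}_X)$, $J(\mathrm{del}_X)$. For states $(K,\psi,o),(K',\psi',o'):I\leadsto X$, $(K,\psi,o)\sim(K',\psi',o')$ iff either ($o\ll\psi_K$, $o'\ll\psi'_{K'}$ and $\psi|_Ko=\psi'|_{K'}o'$) or ($o\not\ll\psi_K$ and $o'\not\ll\psi'_{K'}$). For $F,G:X\leadsto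 Y$, $F\approx G$ iff for every $A$ and every state $\Psi:I\leadsto A\otimes X$, $(\mathrm{Id}_A\otimes F)\bullet\Psi\sim(\mathrm{Id}_A\otimes G)\bullet\Psi$. $\mathrm{Cond}(\mathcal C)=\mathrm{Obs}(\mathcal C)/{\approx}$, a CD category. *)

theory Defs
  imports Main
begin

text \<open>A category is presented by a type of objects 'o (every element is an object),
a type of morphisms 'm, a predicate c_arr of arrows with domain/codomain, composition
c_cmp g f (= g after f), identities, a strict monoidal product on objects and arrows,
the monoidal unit, symmetries c_swp X Y : X (x) Y -> Y (x) X, and the comonoid
structure c_cpy X : X -> X (x) X, c_dl X : X -> I.\<close>

record ('o, 'm) mcat =
  c_arr :: "'m \<Rightarrow> bool"
  c_dom :: "'m \<Rightarrow> 'o"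
  c_cod :: "'m \<Rightarrow> 'o"
  c_cmp :: "'m \<Rightarrow> 'm \<Rightarrow> 'm"
  c_idm :: "'o \<Rightarrow> 'm"
  c_otens :: "'o \<Rightarrow> 'o \<Rightarrow> 'o"
  c_mtens :: "'m \<Rightarrow> 'm \<Rightarrow> 'm"
  c_unit :: "'o"
  c_swp :: "'o \<Rightarrow> 'o \<Rightarrow> 'm"
  c_cpy :: "'o \<Rightarrow> 'm"
  c_dl :: "'o \<Rightarrow> 'm"

definition hom :: "('o, 'm) mcat \<Rightarrow> 'o \<Rightarrow> 'o \<Rightarrow> 'm \<Rightarrow> bool" where
  "hom C X Y f \<longleftrightarrow> c_arr C f \<and> c_dom C f = X \<and> c_cod C f = Y"

locale markov_category =
  fixes C :: "('o, 'm) mcat"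
  assumes id_hom: "hom C X X (c_idm C X)"
    and comp_hom: "hom C X Y f \<Longrightarrow> hom C Y Z g \<Longrightarrow> hom C X Z (c_cmp C g f)"
    and comp_id_right: "hom C X Y f \<Longrightarrow> c_cmp C f (c_idm C X) = f"
    and comp_id_left: "hom C X Y f \<Longrightarrow> c_cmp C (c_idm C Y) f = f"
    and comp_assoc: "hom C X Y f \<Longrightarrow> hom C Y Z g \<Longrightarrow> hom C Z W h \<Longrightarrow>
                     c_cmp C h (c_cmp C g f) = c_cmp C (c_cmp C h g) f"
    and otens_assoc: "c_otens C (c_otens C X Y) Z = c_otens C X (c_otens C Y Z)"
    and otens_unit_left: "c_otens C (c_unit C) X = X"
    and otens_unit_right: "c_otens C X (c_unit C) = X"
    and tens_hom: "hom C X Y f \<Longrightarrow> hom C X' Y' g \<Longrightarrow>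
                   hom C (c_otens C X X') (c_otens C Y Y') (c_mtens C f g)"
    and tens_id: "c_mtens C (c_idm C X) (c_idm C Y) = c_idm C (c_otens C X Y)"
    and interchange: "hom C X Y f \<Longrightarrow> hom C Y Z g \<Longrightarrow> hom C X' Y' f' \<Longrightarrow> hom C Y' Z' g' \<Longrightarrow>
       c_mtens C (c_cmp C g f) (c_cmp C g' f') = c_cmp C (c_mtens C g g') (c_mtens C f f')"
    and tens_assoc: "hom C X Y f \<Longrightarrow> hom C X' Y' g \<Longrightarrow> hom C X'' Y'' h \<Longrightarrow>
       c_mtens C (c_mtens C f g) h = c_mtens C f (c_mtens C g h)"
    and tens_unit_left: "hom C X Y f \<Longrightarrow> c_mtens C (c_idm C (c_unit C)) f = f"
    and tens_unit_right: "hom C X Y f \<Longrightarrow> c_mtens C f (c_idm C (c_unit C)) = f"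
    and swap_hom: "hom C (c_otens C X Y) (c_otens C Y X) (c_swp C X Y)"
    and swap_inv: "c_cmp C (c_swp C Y X) (c_swp C X Y) = c_idm C (c_otens C X Y)"
    and swap_nat: "hom C X X' f \<Longrightarrow> hom C Y Y' g \<Longrightarrow>
       c_cmp C (c_swp C X' Y') (c_mtens C f g) = c_cmp C (c_mtens C g f) (c_swp C X Y)"
    and swap_hexagon: "c_swp C X (c_otens C Y Z) =
       c_cmp C (c_mtens C (c_idm C Y) (c_swp C X Z)) (c_mtens C (c_swp C X Y) (c_idm C Z))"
    and copy_hom: "hom C X (c_otens C X X) (c_cpy C X)"
    and del_hom: "hom C X (c_unit C) (c_dl C X)"
    and counit_left: "c_cmp C (c_mtens C (c_dl C X) (c_idm C X)) (c_cpy C X) = c_idm C X"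
    and counit_right: "c_cmp C (c_mtens C (c_idm C X) (c_dl C X)) (c_cpy C X) = c_idm C X"
    and coassoc: "c_cmp C (c_mtens C (c_cpy C X) (c_idm C X)) (c_cpy C X) =
                  c_cmp C (c_mtens C (c_idm C X) (c_cpy C X)) (c_cpy C X)"
    and cocomm: "c_cmp C (c_swp C X X) (c_cpy C X) = c_cpy C X"
    and copy_tens: "c_cpy C (c_otens C X Y) =
       c_cmp C (c_mtens C (c_mtens C (c_idm C X) (c_swp C X Y)) (c_idm C Y))
               (c_mtens C (c_cpy C X) (c_cpy C Y))"
    and del_tens: "c_dl C (c_otens C X Y) = c_mtens C (c_dl C X) (c_dl C Y)"
    and copy_unit: "c_cpy C (c_unit C) = c_idm C (c_unit C)"
    and del_unit: "c_dl C (c_unit C) = c_idm C (c_unit C)"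
    and unit_terminal: "hom C X (c_unit C) f \<Longrightarrow> f = c_dl C X"

definition deterministic :: "('o, 'm) mcat \<Rightarrow> 'm \<Rightarrow> bool" where
  "deterministic C f \<longleftrightarrow> c_arr C f \<and>
     c_cmp C (c_cpy C (c_cod C f)) f = c_cmp C (c_mtens C f f) (c_cpy C (c_dom C f))"

definition mpair :: "('o, 'm) mcat \<Rightarrow> 'm \<Rightarrow> 'm \<Rightarrow> 'm" where
  "mpair C f g = c_cmp C (c_mtens C f g) (c_cpy C (c_dom C f))"

definition marg1 :: "('o, 'm) mcat \<Rightarrow> 'o \<Rightarrow> 'o \<Rightarrow> 'm \<Rightarrow> 'm" where
  "marg1 C X Y f = c_cmp C (c_mtens C (c_idm C X) (c_dl C Y)) f"

definition marg2 :: "('o, 'm) mcat \<Rightarrow> 'o \<Rightarrow> 'o \<Rightarrow> 'm \<Rightarrow> 'm" where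
  "marg2 C X Y f = c_cmp C (c_mtens C (c_dl C X) (c_idm C Y)) f"

text \<open>g : X (x) A -> Y is a conditional of f : A -> X (x) Y with respect to X\<close>
definition is_cond1 :: "('o, 'm) mcat \<Rightarrow> 'o \<Rightarrow> 'o \<Rightarrow> 'o \<Rightarrow> 'm \<Rightarrow> 'm \<Rightarrow> bool" where
  "is_cond1 C A X Y f g \<longleftrightarrow> hom C (c_otens C X A) Y g \<and>
     f = c_cmp C (c_mtens C (c_idm C X) g)
          (c_cmp C (c_mtens C (c_cpy C X) (c_idm C A))
            (c_cmp C (c_mtens C (marg1 C X Y f) (c_idm C A)) (c_cpy C A)))"

text \<open>g : Y (x) A -> X is a conditional of f : A -> X (x) Y with respect to Y (symmetric version)\<close>
definition is_cond2 :: "('o, 'm) mcat \<Rightarrow> 'o \<Rightarrow> 'o \<Rightarrow> 'o \<Rightarrow> 'm \<Rightarrow> 'm \<Rightarrow> bool" where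
  "is_cond2 C A X Y f g \<longleftrightarrow> hom C (c_otens C Y A) X g \<and>
     f = c_cmp C (c_swp C Y X)
         (c_cmp C (c_mtens C (c_idm C Y) g)
          (c_cmp C (c_mtens C (c_cpy C Y) (c_idm C A))
            (c_cmp C (c_mtens C (marg2 C X Y f) (c_idm C A)) (c_cpy C A))))"

definition has_conditionals :: "('o, 'm) mcat \<Rightarrow> bool" where
  "has_conditionals C \<longleftrightarrow> (\<forall>A X Y f. hom C A (c_otens C X Y) f \<longrightarrow>
      (\<exists>g. is_cond1 C A X Y f g) \<and> (\<exists>g. is_cond2 C A X Y f g))"

definition ase :: "('o, 'm) mcat \<Rightarrow> 'o \<Rightarrow> 'm \<Rightarrow> 'm \<Rightarrow> 'm \<Rightarrow> bool" where
  "ase C X mu f g \<longleftrightarrow>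
     c_cmp C (mpair C (c_idm C X) f) mu = c_cmp C (mpair C (c_idm C X) g) mu"

definition abscont :: "('o, 'm) mcat \<Rightarrow> 'o \<Rightarrow> 'm \<Rightarrow> 'm \<Rightarrow> bool" where
  "abscont C X mu nu \<longleftrightarrow> (\<forall>Y f g. hom C X Y f \<longrightarrow> hom C X Y g \<longrightarrow>
      ase C X nu f g \<longrightarrow> ase C X mu f g)"

definition precise_supports :: "('o, 'm) mcat \<Rightarrow> bool" where
  "precise_supports C \<longleftrightarrow> (\<forall>X Y x y f mu.
     hom C (c_unit C) X x \<and> deterministic C x \<and> hom C (c_unit C) Y y \<and> deterministic C y \<and>
     hom C X Y f \<and> hom C (c_unit C) X mu \<longrightarrow>
     (abscont C (c_otens C X Y) (c_mtens C x y) (c_cmp C (mpair C (c_idm C X) f) mu)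
       \<longleftrightarrow> abscont C X x mu \<and> abscont C Y y (c_cmp C f x)))"

text \<open>A morphism X ~> Y of Obs(C) is a triple (K, f, o); we also record X and Y.\<close>
datatype ('o, 'm) obs = Obs (osrc: 'o) (otgt: 'o) (ores: 'o) (omor: 'm) (oobs: 'm)

definition obs_hom :: "('o, 'm) mcat \<Rightarrow> 'o \<Rightarrow> 'o \<Rightarrow> ('o, 'm) obs \<Rightarrow> bool" where
  "obs_hom C X Y F \<longleftrightarrow> osrc F = X \<and> otgt F = Y \<and>
     hom C X (c_otens C Y (ores F)) (omor F) \<and>
     hom C (c_unit C) (ores F) (oobs F) \<and> deterministic C (oobs F)"

definition obs_id :: "('o, 'm) mcat \<Rightarrow> 'o \<Rightarrow> ('o, 'm) obs" where
  "obs_id C X = Obs X X (c_unit C) (c_idm C X) (c_idm C (c_unit C))"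

definition obs_comp :: "('o, 'm) mcat \<Rightarrow> ('o, 'm) obs \<Rightarrow> ('o, 'm) obs \<Rightarrow> ('o, 'm) obs" where
  "obs_comp C G F = Obs (osrc F) (otgt G) (c_otens C (ores G) (ores F))
      (c_cmp C (c_mtens C (omor G) (c_idm C (ores F))) (omor F))
      (c_mtens C (oobs G) (oobs F))"

definition obs_tens :: "('o, 'm) mcat \<Rightarrow> ('o, 'm) obs \<Rightarrow> ('o, 'm) obs \<Rightarrow> ('o, 'm) obs" where
  "obs_tens C F1 F2 = Obs (c_otens C (osrc F1) (osrc F2)) (c_otens C (otgt F1) (otgt F2))
      (c_otens C (ores F1) (ores F2))
      (c_cmp C (c_mtens C (c_mtens C (c_idm C (otgt F1)) (c_swp C (ores F1) (otgt F2)))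
                  (c_idm C (ores F2)))
               (c_mtens C (omor F1) (omor F2)))
      (c_mtens C (oobs F1) (oobs F2))"

definition obs_J :: "('o, 'm) mcat \<Rightarrow> 'o \<Rightarrow> 'o \<Rightarrow> 'm \<Rightarrow> ('o, 'm) obs" where
  "obs_J C X Y f = Obs X Y (c_unit C) f (c_idm C (c_unit C))"

definition obs_copy :: "('o, 'm) mcat \<Rightarrow> 'o \<Rightarrow> ('o, 'm) obs" where
  "obs_copy C X = obs_J C X (c_otens C X X) (c_cpy C X)"

definition obs_del :: "('o, 'm) mcat \<Rightarrow> 'o \<Rightarrow> ('o, 'm) obs" where
  "obs_del C X = obs_J C X (c_unit C) (c_dl C X)"

definition obs_fails :: "('o, 'm) mcat \<Rightarrow> ('o, 'm) obs \<Rightarrow> bool" where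
  "obs_fails C P \<longleftrightarrow> \<not> abscont C (ores P) (oobs P) (marg2 C (otgt P) (ores P) (omor P))"

definition state_sim :: "('o, 'm) mcat \<Rightarrow> ('o, 'm) obs \<Rightarrow> ('o, 'm) obs \<Rightarrow> bool" where
  "state_sim C P Q \<longleftrightarrow>
     (\<not> obs_fails C P \<and> \<not> obs_fails C Q \<and>
       (\<exists>g h. is_cond2 C (c_unit C) (otgt P) (ores P) (omor P) g \<and>
              is_cond2 C (c_unit C) (otgt Q) (ores Q) (omor Q) h \<and>
              c_cmp C g (oobs P) = c_cmp C h (oobs Q)))
     \<or> (obs_fails C P \<and> obs_fails C Q)"

text \<open>The relation \<approx> on morphisms X ~> Y; equality in Cond(C).\<close>
definition obs_equiv :: "('o, 'm) mcat \<Rightarrow> ('o, 'm) obs \<Rightarrow> ('o, 'm) obs \<Rightarrow> bool" where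
  "obs_equiv C F G \<longleftrightarrow> (\<forall>A P. obs_hom C (c_unit C) (c_otens C A (osrc F)) P \<longrightarrow>
      state_sim C (obs_comp C (obs_tens C (obs_id C A) F) P)
                  (obs_comp C (obs_tens C (obs_id C A) G) P))"

definition is_failure :: "('o, 'm) mcat \<Rightarrow> 'o \<Rightarrow> ('o, 'm) obs \<Rightarrow> bool" where
  "is_failure C X F \<longleftrightarrow> (\<exists>B. obs_hom C (c_unit C) X B \<and> obs_fails C B \<and> obs_equiv C F B)"

definition cond_copyable :: "('o, 'm) mcat \<Rightarrow> ('o, 'm) obs \<Rightarrow> bool" where
  "cond_copyable C F \<longleftrightarrow> obs_equiv C (obs_comp C (obs_copy C (otgt F)) F)
                                     (obs_comp C (obs_tens C F F) (obs_copy C (osrc F)))"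

definition cond_discardable :: "('o, 'm) mcat \<Rightarrow> ('o, 'm) obs \<Rightarrow> bool" where
  "cond_discardable C F \<longleftrightarrow> obs_equiv C (obs_comp C (obs_del C (otgt F)) F) (obs_del C (osrc F))"

end

theory Submission
  imports Defs
begin
context markov_category begin

abbreviation Arr where "Arr \<equiv> c_arr C"
abbreviation Dom where "Dom \<equiv> c_dom C"
abbreviation Cod where "Cod \<equiv> c_cod C"
abbreviation cmp (infixr "\<cdot>" 55) where "g \<cdot> f \<equiv> c_cmp C g f"
abbreviation tn (infixr "\<otimes>" 60) where "f \<otimes> g \<equiv> c_mtens C f g"
abbreviation ot (infixr "\<oplus>" 60) where "X \<oplus> Y \<equiv> c_otens C X Y"
abbreviation U where "U \<equiv> c_unit C"
abbreviation idm where "idm \<equiv> c_idm C"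
abbreviation sw where "sw \<equiv> c_swp C"
abbreviation cp where "cp \<equiv> c_cpy C"
abbreviation dl where "dl \<equiv> c_dl C"

lemma homD: "hom C X Y f \<Longrightarrow> Arr f \<and> Dom f = X \<and> Cod f = Y" by (simp add: hom_def)
lemma homI: "Arr f \<Longrightarrow> Dom f = X \<Longrightarrow> Cod f = Y \<Longrightarrow> hom C X Y f" by (simp add: hom_def)

lemma id_ar[simp]: "Arr (idm X)" "Dom (idm X) = X" "Cod (idm X) = X"
  using homD[OF id_hom] by auto
lemma sw_ar[simp]: "Arr (sw X Y)" "Dom (sw X Y) = X \<oplus> Y" "Cod (sw X Y) = Y \<oplus> X"
  using homD[OF swap_hom] by auto
lemma cp_ar[simp]: "Arr (cp X)" "Dom (cp X) = X" "Cod (cp X) = X \<oplus> X"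
  using homD[OF copy_hom] by auto
lemma dl_ar[simp]: "Arr (dl X)" "Dom (dl X) = X" "Cod (dl X) = U"
  using homD[OF del_hom] by auto

lemma cmp_ar[simp]:
  assumes "Arr f" "Arr g" "Cod f = Dom g"
  shows "Arr (g \<cdot> f)" "Dom (g \<cdot> f) = Dom f" "Cod (g \<cdot> f) = Cod g"
  using homD[OF comp_hom[OF homI[OF assms(1) refl assms(3)] homI[OF assms(2) refl refl]]] by auto

lemma tn_ar[simp]:
  assumes "Arr f" "Arr g"
  shows "Arr (f \<otimes> g)" "Dom (f \<otimes> g) = Dom f \<oplus> Dom g" "Cod (f \<otimes> g) = Cod f \<oplus> Cod g"
  using homD[OF tens_hom[OF homI[OF assms(1) refl refl] homI[OF assms(2) refl refl]]] by auto

declare otens_assoc[simp] otens_unit_left[simp] otens_unit_right[simp]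

lemma idR[simp]: "Arr f \<Longrightarrow> Dom f = X \<Longrightarrow> f \<cdot> idm X = f"
  using comp_id_right homI by blast
lemma idL[simp]: "Arr f \<Longrightarrow> Cod f = X \<Longrightarrow> idm X \<cdot> f = f"
  using comp_id_left homI by blast
lemma assoc[simp]: "Arr f \<Longrightarrow> Arr g \<Longrightarrow> Arr h \<Longrightarrow> Cod f = Dom g \<Longrightarrow> Cod g = Dom h \<Longrightarrow>
   (h \<cdot> g) \<cdot> f = h \<cdot> (g \<cdot> f)"
  using comp_assoc homI by metis
lemma inter: "Arr f \<Longrightarrow> Arr g \<Longrightarrow> Arr f' \<Longrightarrow> Arr g' \<Longrightarrow> Cod f = Dom g \<Longrightarrow> Cod f' = Dom g' \<Longrightarrow>
   (g \<cdot> f) \<otimes> (g' \<cdot> f') = (g \<otimes> g') \<cdot> (f \<otimes> f')"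
  by (rule interchange) (auto intro: homI)
lemma tassoc[simp]: "Arr f \<Longrightarrow> Arr g \<Longrightarrow> Arr h \<Longrightarrow> (f \<otimes> g) \<otimes> h = f \<otimes> (g \<otimes> h)"
  by (rule tens_assoc) (auto intro: homI)
lemma tunitL[simp]: "Arr f \<Longrightarrow> idm U \<otimes> f = f"
  by (rule tens_unit_left) (auto intro: homI)
lemma tunitR[simp]: "Arr f \<Longrightarrow> f \<otimes> idm U = f"
  by (rule tens_unit_right) (auto intro: homI)
lemma tid[simp]: "idm X \<otimes> idm Y = idm (X \<oplus> Y)" by (rule tens_id)
lemma termin: "Arr f \<Longrightarrow> Cod f = U \<Longrightarrow> f = dl (Dom f)"
  by (rule unit_terminal) (auto intro: homI)
lemma dl_U[simp]: "dl U = idm U" by (rule del_unit)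
lemma cp_U[simp]: "cp U = idm U" by (rule copy_unit)

lemma sw_XU[simp]: "sw X U = idm X"
proof -
  let ?s = "sw X U"
  have "sw X (U \<oplus> U) = (idm U \<otimes> sw X U) \<cdot> (sw X U \<otimes> idm U)" by (rule swap_hexagon)
  hence e: "?s = ?s \<cdot> ?s" by simp
  have i: "sw U X \<cdot> ?s = idm X" using swap_inv[of U X] by simp
  have "idm X = sw U X \<cdot> (?s \<cdot> ?s)" using i e by simp
  also have "\<dots> = ?s" using i by (simp flip: assoc)
  finally show ?thesis by simp
qed
lemma sw_UX[simp]: "sw U X = idm X"
  using swap_inv[of U X] by simp


lemma merge[simp]: "Arr f \<Longrightarrow> Arr g \<Longrightarrow> Arr f' \<Longrightarrow> Arr g' \<Longrightarrow> Cod f = Dom g \<Longrightarrow> Cod f' = Dom g' \<Longrightarrow>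
   (g \<otimes> g') \<cdot> (f \<otimes> f') = (g \<cdot> f) \<otimes> (g' \<cdot> f')"
  by (simp add: inter)
lemma merge2[simp]: "Arr f \<Longrightarrow> Arr g \<Longrightarrow> Arr f' \<Longrightarrow> Arr g' \<Longrightarrow> Arr h \<Longrightarrow> Cod f = Dom g \<Longrightarrow> Cod f' = Dom g' \<Longrightarrow>
   Cod h = Dom f \<oplus> Dom f' \<Longrightarrow>
   (g \<otimes> g') \<cdot> ((f \<otimes> f') \<cdot> h) = ((g \<cdot> f) \<otimes> (g' \<cdot> f')) \<cdot> h"
  by (simp flip: assoc)

lemma split_tn: "Arr f \<Longrightarrow> Arr g \<Longrightarrow> f \<otimes> g = (f \<otimes> idm (Cod g)) \<cdot> (idm (Dom f) \<otimes> g)"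
  by simp
lemma split_tn': "Arr f \<Longrightarrow> Arr g \<Longrightarrow> f \<otimes> g = (idm (Cod f) \<otimes> g) \<cdot> (f \<otimes> idm (Dom g))"
  by simp

lemma st_tn1: "Arr a \<Longrightarrow> Dom a = U \<Longrightarrow> Arr b \<Longrightarrow> Dom b = U \<Longrightarrow> Cod b = B \<Longrightarrow> (a \<otimes> idm B) \<cdot> b = a \<otimes> b"
proof -
  assume a: "Arr a" "Dom a = U" "Arr b" "Dom b = U" "Cod b = B"
  have "(a \<otimes> idm B) \<cdot> (idm U \<otimes> b) = a \<otimes> b" using a by (subst merge) auto
  thus ?thesis using a by simp
qed
lemma st_tn2: "Arr a \<Longrightarrow> Dom a = U \<Longrightarrow> Arr b \<Longrightarrow> Dom b = U \<Longrightarrow> Cod a = A \<Longrightarrow> (idm A \<otimes> b) \<cdot> a = a \<otimes> b"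
proof -
  assume a: "Arr a" "Dom a = U" "Arr b" "Dom b = U" "Cod a = A"
  have "(idm A \<otimes> b) \<cdot> (a \<otimes> idm U) = a \<otimes> b" using a by (subst merge) auto
  thus ?thesis using a by simp
qed
lemma st_U: "Arr f \<Longrightarrow> Dom f = U \<Longrightarrow> Cod f = U \<Longrightarrow> f = idm U"
  using termin by force

lemma swnat: "Arr f \<Longrightarrow> Arr g \<Longrightarrow> sw (Cod f) (Cod g) \<cdot> (f \<otimes> g) = (g \<otimes> f) \<cdot> sw (Dom f) (Dom g)"
  by (rule swap_nat) (auto intro: homI)
lemma swinv[simp]: "sw Y X \<cdot> sw X Y = idm (X \<oplus> Y)" by (rule swap_inv)
lemma swinv2[simp]: "Arr h \<Longrightarrow> Cod h = X \<oplus> Y \<Longrightarrow> sw Y X \<cdot> (sw X Y \<cdot> h) = h"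
  by (simp flip: assoc)
lemma sw_st: "Arr a \<Longrightarrow> Dom a = U \<Longrightarrow> Arr b \<Longrightarrow> Dom b = U \<Longrightarrow> Cod a = A \<Longrightarrow> Cod b = B \<Longrightarrow>
   sw A B \<cdot> (a \<otimes> b) = b \<otimes> a"
  using swnat[of a b] by simp

lemma H1: "sw X (Y \<oplus> Z) = (idm Y \<otimes> sw X Z) \<cdot> (sw X Y \<otimes> idm Z)" by (rule swap_hexagon)

lemma inv_uniq: "Arr a \<Longrightarrow> Arr b \<Longrightarrow> Arr c \<Longrightarrow> Dom a = X \<Longrightarrow> Cod a = Y \<Longrightarrow> Dom b = Y \<Longrightarrow> Cod b = X
  \<Longrightarrow> Dom c = Y \<Longrightarrow> Cod c = X \<Longrightarrow> b \<cdot> a = idm X \<Longrightarrow> a \<cdot> c = idm Y \<Longrightarrow> b = c"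
proof -
  assume h: "Arr a" "Arr b" "Arr c" "Dom a = X" "Cod a = Y" "Dom b = Y" "Cod b = X"
    "Dom c = Y" "Cod c = X" "b \<cdot> a = idm X" "a \<cdot> c = idm Y"
  have "b = b \<cdot> (a \<cdot> c)" using h by simp
  also have "\<dots> = (b \<cdot> a) \<cdot> c" by (rule sym, rule assoc) (use h in auto)
  also have "\<dots> = c" using h by (simp del: assoc)
  finally show ?thesis .
qed

lemma H2: "sw (X \<oplus> Y) Z = (sw X Z \<otimes> idm Y) \<cdot> (idm X \<otimes> sw Y Z)"
  by (rule inv_uniq[of "sw Z (X \<oplus> Y)" _ _ "Z \<oplus> X \<oplus> Y" "X \<oplus> Y \<oplus> Z"]) (simp_all, simp add: H1)


lemma tidL[simp]: "Arr f \<Longrightarrow> idm X \<otimes> idm Y \<otimes> f = idm (X \<oplus> Y) \<otimes> f"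
proof -
  assume "Arr f"
  have "idm X \<otimes> idm Y \<otimes> f = (idm X \<otimes> idm Y) \<otimes> f" by (rule tassoc[symmetric]) (auto simp: \<open>Arr f\<close>)
  thus ?thesis by (simp only: tid)
qed
lemma whiskR: "Arr f \<Longrightarrow> Arr g \<Longrightarrow> Cod f = Dom g \<Longrightarrow> (g \<cdot> f) \<otimes> idm Z = (g \<otimes> idm Z) \<cdot> (f \<otimes> idm Z)"
  using inter[of f g "idm Z" "idm Z"] by (simp del: merge merge2)
lemma whiskL: "Arr f \<Longrightarrow> Arr g \<Longrightarrow> Cod f = Dom g \<Longrightarrow> idm Z \<otimes> (g \<cdot> f) = (idm Z \<otimes> g) \<cdot> (idm Z \<otimes> f)"
  using inter[of "idm Z" "idm Z" f g] by (simp del: merge merge2)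

lemma Kid: "(idm Y \<otimes> sw Y X \<otimes> idm X) \<cdot> sw (X \<oplus> X) (Y \<oplus> Y) = (sw X Y \<otimes> sw X Y) \<cdot> (idm X \<otimes> sw X Y \<otimes> idm Y)"
  apply (simp add: H1 H2)
  apply (subst whiskR, simp_all)
  done

lemma Kid2: "Arr h \<Longrightarrow> Cod h = X \<oplus> X \<oplus> Y \<oplus> Y \<Longrightarrow>
  (idm Y \<otimes> sw Y X \<otimes> idm X) \<cdot> (sw (X \<oplus> X) (Y \<oplus> Y) \<cdot> h) = (sw X Y \<otimes> sw X Y) \<cdot> ((idm X \<otimes> sw X Y \<otimes> idm Y) \<cdot> h)"
proof -
  assume h: "Arr h" "Cod h = X \<oplus> X \<oplus> Y \<oplus> Y"
  have "(idm Y \<otimes> sw Y X \<otimes> idm X) \<cdot> (sw (X \<oplus> X) (Y \<oplus> Y) \<cdot> h) = ((idm Y \<otimes> sw Y X \<otimes> idm X) \<cdot> sw (X \<oplus> X) (Y \<oplus> Y)) \<cdot> h"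
    using h by (simp del: merge merge2)
  also have "\<dots> = ((sw X Y \<otimes> sw X Y) \<cdot> (idm X \<otimes> sw X Y \<otimes> idm Y)) \<cdot> h" by (simp only: Kid)
  also have "\<dots> = (sw X Y \<otimes> sw X Y) \<cdot> ((idm X \<otimes> sw X Y \<otimes> idm Y) \<cdot> h)"
    using h by (simp del: merge merge2)
  finally show ?thesis .
qed

lemma sw_det: "cp (Y \<oplus> X) \<cdot> sw X Y = (sw X Y \<otimes> sw X Y) \<cdot> cp (X \<oplus> Y)"
proof -
  have c2: "(cp Y \<otimes> cp X) \<cdot> sw X Y = sw (X \<oplus> X) (Y \<oplus> Y) \<cdot> (cp X \<otimes> cp Y)"
    using swnat[of "cp X" "cp Y"] by simp
  show ?thesis by (simp add: copy_tens c2 Kid2)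
qed


lemma ase_iff: "Arr f \<Longrightarrow> Arr g \<Longrightarrow> Arr mu \<Longrightarrow> Dom f = X \<Longrightarrow> Dom g = X \<Longrightarrow> Cod mu = X \<Longrightarrow> ase C X mu f g \<longleftrightarrow> (idm X \<otimes> f) \<cdot> (cp X \<cdot> mu) = (idm X \<otimes> g) \<cdot> (cp X \<cdot> mu)"
  by (simp add: ase_def mpair_def)

lemma abs_refl: "abscont C X mu mu" by (simp add: abscont_def)

lemma abs_iso:
  assumes s: "Arr s" "Dom s = X" "Cod s = X'" "Arr t" "Dom t = X'" "Cod t = X" "t \<cdot> s = idm X"
    and det: "cp X' \<cdot> s = (s \<otimes> s) \<cdot> cp X"
    and mu: "Arr mu" "Dom mu = U" "Cod mu = X" and nu: "Arr nu" "Dom nu = U" "Cod nu = X"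
    and ac: "abscont C X mu nu"
  shows "abscont C X' (s \<cdot> mu) (s \<cdot> nu)"
  unfolding abscont_def
proof (intro allI impI)
  fix Y f g assume f: "hom C X' Y f" and g: "hom C X' Y g" and e: "ase C X' (s \<cdot> nu) f g"
  have det': "cp X' \<cdot> (s \<cdot> h) = (s \<otimes> s) \<cdot> (cp X \<cdot> h)" if "Arr h" "Cod h = X" for h
  proof -
    have "cp X' \<cdot> (s \<cdot> h) = (cp X' \<cdot> s) \<cdot> h" using that s by simp
    also have "\<dots> = ((s \<otimes> s) \<cdot> cp X) \<cdot> h" by (simp only: det)
    also have "\<dots> = (s \<otimes> s) \<cdot> (cp X \<cdot> h)" using that s by (simp del: merge merge2)
    finally show ?thesis .
  qed
  have key: "(idm X' \<otimes> k) \<cdot> (cp X' \<cdot> (s \<cdot> h)) = (s \<otimes> idm Y) \<cdot> ((idm X \<otimes> (k \<cdot> s)) \<cdot> (cp X \<cdot> h))"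
    if "hom C X' Y k" "Arr h" "Cod h = X" for k h
    using that s by (simp add: det' hom_def)
  have canc: "A = B" if "(s \<otimes> idm Y) \<cdot> A = (s \<otimes> idm Y) \<cdot> B" "Arr A" "Arr B" "Cod A = X \<oplus> Y" "Cod B = X \<oplus> Y" for A B
  proof -
    have "(t \<otimes> idm Y) \<cdot> ((s \<otimes> idm Y) \<cdot> A) = (t \<otimes> idm Y) \<cdot> ((s \<otimes> idm Y) \<cdot> B)" using that(1) by simp
    moreover have "(t \<otimes> idm Y) \<cdot> ((s \<otimes> idm Y) \<cdot> A) = A" using that(2-) s by simp
    moreover have "(t \<otimes> idm Y) \<cdot> ((s \<otimes> idm Y) \<cdot> B) = B" using that(2-) s by simp
    ultimately show ?thesis by simp
  qed
  have "(idm X \<otimes> (f \<cdot> s)) \<cdot> (cp X \<cdot> nu) = (idm X \<otimes> (g \<cdot> s)) \<cdot> (cp X \<cdot> nu)"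
    apply (rule canc)
    using e key[OF f nu(1,3)] key[OF g nu(1,3)] f g s nu by (auto simp: ase_iff hom_def)
  hence "ase C X nu (f \<cdot> s) (g \<cdot> s)" using f g s nu by (simp add: ase_iff hom_def)
  hence "ase C X mu (f \<cdot> s) (g \<cdot> s)" using ac f g s unfolding abscont_def by (auto simp: hom_def)
  thus "ase C X' (s \<cdot> mu) f g"
    using key[OF f mu(1,3)] key[OF g mu(1,3)] f g s mu by (simp add: ase_iff hom_def)
qed

lemma abs_swap:
  assumes "Arr mu" "Dom mu = U" "Cod mu = X \<oplus> Y" "Arr nu" "Dom nu = U" "Cod nu = X \<oplus> Y"
    "abscont C (X \<oplus> Y) mu nu"
  shows "abscont C (Y \<oplus> X) (sw X Y \<cdot> mu) (sw X Y \<cdot> nu)"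
  by (rule abs_iso[where t="sw Y X"]) (use assms sw_det in auto)

lemma det_st: "Arr x \<Longrightarrow> Dom x = U \<Longrightarrow> deterministic C x \<longleftrightarrow> cp (Cod x) \<cdot> x = x \<otimes> x"
  by (simp add: deterministic_def)


lemma dl_cmp[simp]: "Arr f \<Longrightarrow> Cod f = X \<Longrightarrow> dl X \<cdot> f = dl (Dom f)"
  using termin[of "dl X \<cdot> f"] by simp

lemma mpair_const:
  assumes a: "Arr a" "Dom a = U" "Cod a = X" and b: "Arr b" "Dom b = U" "Cod b = Y"
  shows "mpair C (idm X) (b \<cdot> dl X) \<cdot> a = a \<otimes> b"
proof -
  have "mpair C (idm X) (b \<cdot> dl X) \<cdot> a = (idm X \<otimes> (b \<cdot> dl X)) \<cdot> (cp X \<cdot> a)"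
    using a b by (simp add: mpair_def)
  also have "\<dots> = (idm X \<otimes> b) \<cdot> ((idm X \<otimes> dl X) \<cdot> (cp X \<cdot> a))"
    using a b by (simp add: whiskL del: merge merge2)
  also have "(idm X \<otimes> dl X) \<cdot> (cp X \<cdot> a) = ((idm X \<otimes> dl X) \<cdot> cp X) \<cdot> a" using a by (simp del: merge merge2)
  also have "\<dots> = a" using counit_right[of X] a by simp
  finally show ?thesis using a b st_tn2 by simp
qed

lemma det_tn:
  assumes x: "Arr x" "Dom x = U" "deterministic C x" and y: "Arr y" "Dom y = U" "deterministic C y"
  shows "deterministic C (x \<otimes> y)"
proof -
  have cx: "cp (Cod x) \<cdot> x = x \<otimes> x" and cy: "cp (Cod y) \<cdot> y = y \<otimes> y" using x y det_st by auto
  have "cp (Cod x \<oplus> Cod y) \<cdot> (x \<otimes> y) = (idm (Cod x) \<otimes> sw (Cod x) (Cod y) \<otimes> idm (Cod y)) \<cdot> ((cp (Cod x) \<cdot> x) \<otimes> (cp (Cod y) \<cdot> y))"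
  proof -
    let ?X = "Cod x" and ?Y = "Cod y"
    have "cp (?X \<oplus> ?Y) \<cdot> (x \<otimes> y) = (((idm ?X \<otimes> sw ?X ?Y) \<otimes> idm ?Y) \<cdot> (cp ?X \<otimes> cp ?Y)) \<cdot> (x \<otimes> y)"
      by (simp only: copy_tens)
    also have "\<dots> = ((idm ?X \<otimes> sw ?X ?Y) \<otimes> idm ?Y) \<cdot> ((cp ?X \<otimes> cp ?Y) \<cdot> (x \<otimes> y))"
      by (rule assoc) (use x y in auto)
    also have "(cp ?X \<otimes> cp ?Y) \<cdot> (x \<otimes> y) = (cp ?X \<cdot> x) \<otimes> (cp ?Y \<cdot> y)"
      by (rule merge) (use x y in auto)
    also have "(idm ?X \<otimes> sw ?X ?Y) \<otimes> idm ?Y = idm ?X \<otimes> sw ?X ?Y \<otimes> idm ?Y"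
      by (rule tassoc) auto
    finally show ?thesis .
  qed
  also have "\<dots> = (idm (Cod x) \<otimes> sw (Cod x) (Cod y) \<otimes> idm (Cod y)) \<cdot> (x \<otimes> (x \<otimes> y) \<otimes> y)"
    using x y by (simp add: cx cy)
  also have "\<dots> = x \<otimes> (sw (Cod x) (Cod y) \<cdot> (x \<otimes> y)) \<otimes> y"
    using x y by (simp del: tassoc)
  also have "\<dots> = x \<otimes> y \<otimes> x \<otimes> y" using x y sw_st by simp
  finally show ?thesis using x y by (simp add: det_st)
qed

lemma PS_prod:
  assumes ps: "precise_supports C"
    and x: "Arr x" "Dom x = U" "Cod x = X" "deterministic C x"
    and y: "Arr y" "Dom y = U" "Cod y = Y" "deterministic C y"
    and a: "Arr a" "Dom a = U" "Cod a = X" and b: "Arr b" "Dom b = U" "Cod b = Y"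
  shows "abscont C (X \<oplus> Y) (x \<otimes> y) (a \<otimes> b) \<longleftrightarrow> abscont C X x a \<and> abscont C Y y b"
proof -
  have "abscont C (X \<oplus> Y) (x \<otimes> y) (mpair C (idm X) (b \<cdot> dl X) \<cdot> a) \<longleftrightarrow>
        abscont C X x a \<and> abscont C Y y ((b \<cdot> dl X) \<cdot> x)"
  proof -
    have H: "hom C U X x \<and> deterministic C x \<and> hom C U Y y \<and> deterministic C y \<and>
       hom C X Y (b \<cdot> dl X) \<and> hom C U X a" using x y a b by (simp add: hom_def)
    have PS: "\<forall>X Y x y f mu.
     hom C (c_unit C) X x \<and> deterministic C x \<and> hom C (c_unit C) Y y \<and> deterministic C y \<and>
     hom C X Y f \<and> hom C (c_unit C) X mu \<longrightarrow>
     (abscont C (c_otens C X Y) (c_mtens C x y) (c_cmp C (mpair C (c_idm C X) f) mu)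
       \<longleftrightarrow> abscont C X x mu \<and> abscont C Y y (c_cmp C f x))" using ps unfolding precise_supports_def .
    show ?thesis using mp[OF spec[OF spec[OF spec[OF spec[OF spec[OF spec[OF PS, of X], of Y], of x], of y], of "b \<cdot> dl X"], of a] H] .
  qed
  moreover have "(b \<cdot> dl X) \<cdot> x = b" using x b by simp
  ultimately show ?thesis using mpair_const[OF a b] by simp
qed


lemma merge_split: "Arr f \<Longrightarrow> Arr g \<Longrightarrow> Cod g = Dom f \<oplus> Y \<Longrightarrow>
  (f \<otimes> idm (Y \<oplus> Z)) \<cdot> (g \<otimes> idm Z) = ((f \<otimes> idm Y) \<cdot> g) \<otimes> idm Z"
proof -
  assume a: "Arr f" "Arr g" "Cod g = Dom f \<oplus> Y"
  have e: "f \<otimes> idm (Y \<oplus> Z) = (f \<otimes> idm Y) \<otimes> idm Z" using a by simp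
  have "(f \<otimes> idm (Y \<oplus> Z)) \<cdot> (g \<otimes> idm Z) = ((f \<otimes> idm Y) \<otimes> idm Z) \<cdot> (g \<otimes> idm Z)" by (simp only: e)
  also have "\<dots> = ((f \<otimes> idm Y) \<cdot> g) \<otimes> (idm Z \<cdot> idm Z)" by (rule merge) (use a in auto)
  finally show ?thesis by simp
qed

lemma dl_st: "Arr v \<Longrightarrow> Dom v = U \<Longrightarrow> dl A \<otimes> v = v \<cdot> dl A"
proof -
  assume a: "Arr v" "Dom v = U"
  have "(idm U \<otimes> v) \<cdot> (dl A \<otimes> idm U) = dl A \<otimes> v" using a by (subst merge) auto
  thus ?thesis using a by simp
qed

lemma marg_ins:
  assumes p: "Arr p" "Dom p = U" "Cod p = X \<oplus> K" and q: "Arr q" "Dom q = U" "Cod q = A \<oplus> K0"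
  shows "marg2 C (A \<oplus> X) (K \<oplus> K0) ((idm A \<otimes> p \<otimes> idm K0) \<cdot> q) = marg2 C X K p \<otimes> marg2 C A K0 q"
proof -
  let ?v = "(dl X \<otimes> idm K) \<cdot> p" and ?w = "(dl A \<otimes> idm K0) \<cdot> q"
  have v: "Arr ?v" "Dom ?v = U" "Cod ?v = K" using p by auto
  have "marg2 C (A \<oplus> X) (K \<oplus> K0) ((idm A \<otimes> p \<otimes> idm K0) \<cdot> q)
     = ((dl A \<otimes> dl X \<otimes> idm (K \<oplus> K0)) \<cdot> (idm A \<otimes> p \<otimes> idm K0)) \<cdot> q"
    using p q by (simp add: marg2_def del_tens del: merge merge2 tid)
  also have "(dl A \<otimes> dl X \<otimes> idm (K \<oplus> K0)) \<cdot> (idm A \<otimes> p \<otimes> idm K0) = dl A \<otimes> ((dl X \<otimes> idm (K \<oplus> K0)) \<cdot> (p \<otimes> idm K0))"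
    using p by (subst merge) auto
  also have "(dl X \<otimes> idm (K \<oplus> K0)) \<cdot> (p \<otimes> idm K0) = ?v \<otimes> idm K0"
    using p by (subst merge_split) auto
  also have "dl A \<otimes> (?v \<otimes> idm K0) = (?v \<otimes> idm K0) \<cdot> (dl A \<otimes> idm K0)"
    using v dl_st[OF v(1,2), of A] by (simp del: tassoc add: tassoc[symmetric])
  also have "((?v \<otimes> idm K0) \<cdot> (dl A \<otimes> idm K0)) \<cdot> q = (?v \<otimes> idm K0) \<cdot> ?w"
    using v q by (simp del: merge merge2)
  also have "\<dots> = ?v \<otimes> ?w" using v q by (subst st_tn1) auto
  finally show ?thesis by (simp add: marg2_def)
qed


lemma obs_homD:
  assumes "obs_hom C X Y P"
  shows "osrc P = X" "otgt P = Y" "Arr (omor P)" "Dom (omor P) = X" "Cod (omor P) = Y \<oplus> ores P"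
    "Arr (oobs P)" "Dom (oobs P) = U" "Cod (oobs P) = ores P" "deterministic C (oobs P)"
  using assms by (auto simp: obs_hom_def hom_def)

lemma marg2_ar[simp]: "Arr p \<Longrightarrow> Cod p = X \<oplus> K \<Longrightarrow> Arr (marg2 C X K p)"
   "Arr p \<Longrightarrow> Cod p = X \<oplus> K \<Longrightarrow> Dom (marg2 C X K p) = Dom p"
   "Arr p \<Longrightarrow> Cod p = X \<oplus> K \<Longrightarrow> Cod (marg2 C X K p) = K"
  by (auto simp: marg2_def)

lemma tens_id_st: "obs_hom C U X P \<Longrightarrow>
   obs_tens C (obs_id C A) P = Obs A (A \<oplus> X) (ores P) (idm A \<otimes> omor P) (oobs P)"
proof -
  assume P: "obs_hom C U X P"
  note p = obs_homD[OF P]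
  show ?thesis using p by (simp add: obs_tens_def obs_id_def)
qed

lemma comp_st: "obs_hom C U X P \<Longrightarrow> obs_hom C U A Q \<Longrightarrow>
   obs_comp C (obs_tens C (obs_id C A) P) Q =
   Obs U (A \<oplus> X) (ores P \<oplus> ores Q) ((idm A \<otimes> omor P \<otimes> idm (ores Q)) \<cdot> omor Q) (oobs P \<otimes> oobs Q)"
proof -
  assume P: "obs_hom C U X P" and Q: "obs_hom C U A Q"
  note p = obs_homD[OF P] and q = obs_homD[OF Q]
  show ?thesis using p q by (simp add: tens_id_st[OF P] obs_comp_def)
qed

lemma comp_st_hom: "obs_hom C U X P \<Longrightarrow> obs_hom C U A Q \<Longrightarrow>
   obs_hom C U (A \<oplus> X) (obs_comp C (obs_tens C (obs_id C A) P) Q)"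
proof -
  assume P: "obs_hom C U X P" and Q: "obs_hom C U A Q"
  note p = obs_homD[OF P] and q = obs_homD[OF Q]
  show ?thesis using p q by (simp add: comp_st[OF P Q] obs_hom_def hom_def det_tn)
qed

lemma COMPF:
  assumes ps: "precise_supports C" and P: "obs_hom C U X P" and Q: "obs_hom C U A Q"
  shows "obs_fails C (obs_comp C (obs_tens C (obs_id C A) P) Q) \<longleftrightarrow> obs_fails C P \<or> obs_fails C Q"
proof -
  note p = obs_homD[OF P] and q = obs_homD[OF Q]
  have m: "marg2 C (A \<oplus> X) (ores P \<oplus> ores Q) ((idm A \<otimes> omor P \<otimes> idm (ores Q)) \<cdot> omor Q)
     = marg2 C X (ores P) (omor P) \<otimes> marg2 C A (ores Q) (omor Q)"
    by (rule marg_ins) (use p q in auto)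
  show ?thesis
    unfolding obs_fails_def comp_st[OF P Q] using m p q
    by (simp add: PS_prod[OF ps])
qed

lemma sim_refl: "has_conditionals C \<Longrightarrow> Arr (omor R) \<Longrightarrow> Dom (omor R) = U \<Longrightarrow>
  Cod (omor R) = otgt R \<oplus> ores R \<Longrightarrow> state_sim C R R"
  unfolding state_sim_def has_conditionals_def by (metis homI)

lemma equiv_refl: "has_conditionals C \<Longrightarrow> obs_hom C U X P \<Longrightarrow> obs_equiv C P P"
  unfolding obs_equiv_def
proof (intro allI impI)
  fix A Q assume hc: "has_conditionals C" and P: "obs_hom C U X P" and Q: "obs_hom C U (A \<oplus> osrc P) Q"
  hence Q': "obs_hom C U A Q" using obs_homD(1)[OF P] by simp
  show "state_sim C (obs_comp C (obs_tens C (obs_id C A) P) Q) (obs_comp C (obs_tens C (obs_id C A) P) Q)"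
    using obs_homD[OF comp_st_hom[OF P Q']] by (intro sim_refl[OF hc]) auto
qed


lemma PSi:
  assumes ps: "precise_supports C"
    and x: "Arr x" "Dom x = U" "Cod x = X" "deterministic C x"
    and y: "Arr y" "Dom y = U" "Cod y = Y" "deterministic C y"
    and f: "Arr f" "Dom f = X" "Cod f = Y" and a: "Arr a" "Dom a = U" "Cod a = X"
  shows "abscont C (X \<oplus> Y) (x \<otimes> y) (mpair C (idm X) f \<cdot> a) \<longleftrightarrow> abscont C X x a \<and> abscont C Y y (f \<cdot> x)"
proof -
  have H: "hom C U X x \<and> deterministic C x \<and> hom C U Y y \<and> deterministic C y \<and>
       hom C X Y f \<and> hom C U X a" using x y a f by (simp add: hom_def)
  have PS: "\<forall>X Y x y f mu.
     hom C (c_unit C) X x \<and> deterministic C x \<and> hom C (c_unit C) Y y \<and> deterministic C y \<and>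
     hom C X Y f \<and> hom C (c_unit C) X mu \<longrightarrow>
     (abscont C (c_otens C X Y) (c_mtens C x y) (c_cmp C (mpair C (c_idm C X) f) mu)
       \<longleftrightarrow> abscont C X x mu \<and> abscont C Y y (c_cmp C f x))" using ps unfolding precise_supports_def .
  show ?thesis using mp[OF spec[OF spec[OF spec[OF spec[OF spec[OF spec[OF PS, of X], of Y], of x], of y], of f], of a] H] .
qed

lemma part1:
  assumes ps: "precise_supports C" and P: "obs_hom C U X P" and P': "obs_hom C U X P'"
    and f: "obs_fails C P" "obs_fails C P'"
  shows "obs_equiv C P P'"
  unfolding obs_equiv_def
proof (intro allI impI)
  fix A Q assume Q: "obs_hom C U (A \<oplus> osrc P) Q"
  hence Q': "obs_hom C U A Q" using obs_homD(1)[OF P] by simp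
  show "state_sim C (obs_comp C (obs_tens C (obs_id C A) P) Q) (obs_comp C (obs_tens C (obs_id C A) P') Q)"
    unfolding state_sim_def using COMPF[OF ps P Q'] COMPF[OF ps P' Q'] f by simp
qed

lemma tens_obs: "obs_hom C U X P \<Longrightarrow> obs_hom C U Y Q \<Longrightarrow> obs_tens C P Q =
  Obs U (X \<oplus> Y) (ores P \<oplus> ores Q) ((idm X \<otimes> sw (ores P) Y \<otimes> idm (ores Q)) \<cdot> (omor P \<otimes> omor Q))
    (oobs P \<otimes> oobs Q)"
proof -
  assume P: "obs_hom C U X P" and Q: "obs_hom C U Y Q"
  note p = obs_homD[OF P] and q = obs_homD[OF Q]
  show ?thesis using p q by (simp add: obs_tens_def)
qed

lemma tens_obs_hom: "obs_hom C U X P \<Longrightarrow> obs_hom C U Y Q \<Longrightarrow> obs_hom C U (X \<oplus> Y) (obs_tens C P Q)"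
proof -
  assume P: "obs_hom C U X P" and Q: "obs_hom C U Y Q"
  note p = obs_homD[OF P] and q = obs_homD[OF Q]
  show ?thesis using p q by (simp add: tens_obs[OF P Q] obs_hom_def hom_def det_tn)
qed

lemma TENSF:
  assumes ps: "precise_supports C" and P: "obs_hom C U X P" and Q: "obs_hom C U Y Q"
  shows "obs_fails C (obs_tens C P Q) \<longleftrightarrow> obs_fails C P \<or> obs_fails C Q"
proof -
  note p = obs_homD[OF P] and q = obs_homD[OF Q]
  let ?K = "ores P" and ?L = "ores Q"
  have a: "(dl X \<otimes> dl Y \<otimes> idm (?K \<oplus> ?L)) \<cdot> (idm X \<otimes> sw ?K Y \<otimes> idm ?L)
      = dl X \<otimes> ((dl Y \<otimes> idm (?K \<oplus> ?L)) \<cdot> (sw ?K Y \<otimes> idm ?L))" by (subst merge) auto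
  have b: "(dl Y \<otimes> idm (?K \<oplus> ?L)) \<cdot> (sw ?K Y \<otimes> idm ?L) = ((dl Y \<otimes> idm ?K) \<cdot> sw ?K Y) \<otimes> idm ?L"
    by (subst merge_split) auto
  have c: "(dl Y \<otimes> idm ?K) \<cdot> sw ?K Y = idm ?K \<otimes> dl Y"
    using swnat[of "idm ?K" "dl Y"] by simp
  have d: "(dl X \<otimes> idm ?K \<otimes> dl Y \<otimes> idm ?L) \<cdot> (omor P \<otimes> omor Q) =
     ((dl X \<otimes> idm ?K) \<cdot> omor P) \<otimes> ((dl Y \<otimes> idm ?L) \<cdot> omor Q)"
  proof -
    have "dl X \<otimes> idm ?K \<otimes> dl Y \<otimes> idm ?L = (dl X \<otimes> idm ?K) \<otimes> (dl Y \<otimes> idm ?L)" by simp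
    thus ?thesis using p q by (simp del: tassoc)
  qed
  have m: "marg2 C (X \<oplus> Y) (?K \<oplus> ?L) ((idm X \<otimes> sw ?K Y \<otimes> idm ?L) \<cdot> (omor P \<otimes> omor Q))
     = marg2 C X ?K (omor P) \<otimes> marg2 C Y ?L (omor Q)"
  proof -
    have "marg2 C (X \<oplus> Y) (?K \<oplus> ?L) ((idm X \<otimes> sw ?K Y \<otimes> idm ?L) \<cdot> (omor P \<otimes> omor Q))
       = ((dl X \<otimes> dl Y \<otimes> idm (?K \<oplus> ?L)) \<cdot> (idm X \<otimes> sw ?K Y \<otimes> idm ?L)) \<cdot> (omor P \<otimes> omor Q)"
      using p q by (simp add: marg2_def del_tens del: merge merge2 tid)
    also have "\<dots> = (dl X \<otimes> idm ?K \<otimes> dl Y \<otimes> idm ?L) \<cdot> (omor P \<otimes> omor Q)"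
      by (simp only: a b c) (simp del: merge merge2)
    finally show ?thesis using d by (simp add: marg2_def)
  qed
  show ?thesis
    unfolding obs_fails_def tens_obs[OF P Q] using m p q
    by (simp add: PS_prod[OF ps])
qed


lemma cond2_st: "Arr p \<Longrightarrow> Dom p = U \<Longrightarrow> Cod p = X \<oplus> K \<Longrightarrow> is_cond2 C U X K p g \<Longrightarrow>
   Arr g \<and> Dom g = K \<and> Cod g = X \<and> p = sw K X \<cdot> ((idm K \<otimes> g) \<cdot> (cp K \<cdot> marg2 C X K p))"
proof -
  assume a: "Arr p" "Dom p = U" "Cod p = X \<oplus> K" "is_cond2 C U X K p g"
  hence g: "Arr g" "Dom g = K" "Cod g = X" by (auto simp: is_cond2_def hom_def)
  have "p = sw K X \<cdot> ((idm K \<otimes> g) \<cdot> ((cp K \<otimes> idm U) \<cdot> ((marg2 C X K p \<otimes> idm U) \<cdot> cp U)))"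
    using a(4) unfolding is_cond2_def by simp
  also have "\<dots> = sw K X \<cdot> ((idm K \<otimes> g) \<cdot> (cp K \<cdot> marg2 C X K p))" using a by simp
  finally show ?thesis using g by simp
qed

lemma comp_obs: "obs_hom C X Y F \<Longrightarrow> obs_hom C U X P \<Longrightarrow> obs_comp C F P =
  Obs U Y (ores F \<oplus> ores P) ((omor F \<otimes> idm (ores P)) \<cdot> omor P) (oobs F \<otimes> oobs P)"
proof -
  assume F: "obs_hom C X Y F" and P: "obs_hom C U X P"
  note f = obs_homD[OF F] and p = obs_homD[OF P]
  show ?thesis using f p by (simp add: obs_comp_def)
qed

lemma comp_obs_hom: "obs_hom C X Y F \<Longrightarrow> obs_hom C U X P \<Longrightarrow> obs_hom C U Y (obs_comp C F P)"
proof -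
  assume F: "obs_hom C X Y F" and P: "obs_hom C U X P"
  note f = obs_homD[OF F] and p = obs_homD[OF P]
  show ?thesis using f p by (simp add: comp_obs[OF F P] obs_hom_def hom_def det_tn)
qed

lemma COMPF2:
  assumes ps: "precise_supports C" and hc: "has_conditionals C"
    and F: "obs_hom C X Y F" and P: "obs_hom C U X P" and fl: "obs_fails C P"
  shows "obs_fails C (obs_comp C F P)"
proof -
  note f = obs_homD[OF F] and p = obs_homD[OF P]
  let ?K = "ores P" and ?L = "ores F" and ?p = "omor P" and ?f = "omor F"
  let ?v = "marg2 C X ?K ?p" and ?h = "(dl Y \<otimes> idm ?L) \<cdot> ?f"
  obtain g where "is_cond2 C U X ?K ?p g" using hc p unfolding has_conditionals_def by (metis homI)
  hence g: "Arr g" "Dom g = ?K" "Cod g = X" and pe: "?p = sw ?K X \<cdot> ((idm ?K \<otimes> g) \<cdot> (cp ?K \<cdot> ?v))"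
    using cond2_st p by blast+
  have v: "Arr ?v" "Dom ?v = U" "Cod ?v = ?K" using p by auto
  have h: "Arr ?h" "Dom ?h = X" "Cod ?h = ?L" using f by auto
  have m1: "marg2 C Y (?L \<oplus> ?K) ((?f \<otimes> idm ?K) \<cdot> ?p) = (?h \<otimes> idm ?K) \<cdot> ?p"
  proof -
    have "marg2 C Y (?L \<oplus> ?K) ((?f \<otimes> idm ?K) \<cdot> ?p) = ((dl Y \<otimes> idm (?L \<oplus> ?K)) \<cdot> (?f \<otimes> idm ?K)) \<cdot> ?p"
      using f p by (simp add: marg2_def del: merge merge2 tid)
    also have "(dl Y \<otimes> idm (?L \<oplus> ?K)) \<cdot> (?f \<otimes> idm ?K) = ?h \<otimes> idm ?K"
      using f by (subst merge_split) auto
    finally show ?thesis .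
  qed
  define N where "N = mpair C (idm ?K) (?h \<cdot> g) \<cdot> ?v"
  have N: "Arr N" "Dom N = U" "Cod N = ?K \<oplus> ?L" using v g h by (auto simp: N_def mpair_def)
  have m2: "(?h \<otimes> idm ?K) \<cdot> ?p = sw ?K ?L \<cdot> N"
  proof -
    have "(?h \<otimes> idm ?K) \<cdot> ?p = ((?h \<otimes> idm ?K) \<cdot> sw ?K X) \<cdot> ((idm ?K \<otimes> g) \<cdot> (cp ?K \<cdot> ?v))"
      using h g v by (subst pe) (simp del: merge merge2)
    also have "(?h \<otimes> idm ?K) \<cdot> sw ?K X = sw ?K ?L \<cdot> (idm ?K \<otimes> ?h)"
      using swnat[of "idm ?K" ?h] h by simp
    also have "(sw ?K ?L \<cdot> (idm ?K \<otimes> ?h)) \<cdot> ((idm ?K \<otimes> g) \<cdot> (cp ?K \<cdot> ?v)) = sw ?K ?L \<cdot> N"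
      using h g v by (simp add: N_def mpair_def)
    finally show ?thesis .
  qed
  show ?thesis
  proof (rule ccontr)
    assume "\<not> obs_fails C (obs_comp C F P)"
    hence ac: "abscont C (?L \<oplus> ?K) (oobs F \<otimes> oobs P) (sw ?K ?L \<cdot> N)"
      unfolding obs_fails_def comp_obs[OF F P] using m1 m2 by simp
    have "abscont C (?K \<oplus> ?L) (sw ?L ?K \<cdot> (oobs F \<otimes> oobs P)) (sw ?L ?K \<cdot> (sw ?K ?L \<cdot> N))"
      by (rule abs_swap) (use ac N f p in auto)
    hence "abscont C (?K \<oplus> ?L) (oobs P \<otimes> oobs F) N" using sw_st f p N by simp
    hence "abscont C ?K (oobs P) ?v" unfolding N_def
      using PSi[OF ps, of "oobs P" ?K "oobs F" ?L "?h \<cdot> g" ?v] f p g h v by simp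
    thus False using fl unfolding obs_fails_def using p by simp
  qed
qed


lemma E1: "sw (K \<oplus> L) (K \<oplus> L) \<cdot> (idm K \<otimes> sw K L \<otimes> idm L) = (sw K (K \<oplus> L) \<otimes> idm L) \<cdot> (idm (K \<oplus> K) \<otimes> sw L L)"
proof -
  have h: "sw (K \<oplus> L) (K \<oplus> L) = (sw K (K \<oplus> L) \<otimes> idm L) \<cdot> (idm K \<otimes> sw L (K \<oplus> L))" by (rule H2)
  have e: "sw L (K \<oplus> L) \<cdot> (sw K L \<otimes> idm L) = idm K \<otimes> sw L L" by (simp add: H1)
  have "sw (K \<oplus> L) (K \<oplus> L) \<cdot> (idm K \<otimes> sw K L \<otimes> idm L) = (sw K (K \<oplus> L) \<otimes> idm L) \<cdot> ((idm K \<otimes> sw L (K \<oplus> L)) \<cdot> (idm K \<otimes> sw K L \<otimes> idm L))"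
    by (simp only: h) (simp del: merge merge2)
  also have "(idm K \<otimes> sw L (K \<oplus> L)) \<cdot> (idm K \<otimes> sw K L \<otimes> idm L) = idm K \<otimes> (sw L (K \<oplus> L) \<cdot> (sw K L \<otimes> idm L))"
    by (subst merge) auto
  finally show ?thesis by (simp only: e) simp
qed

lemma E3: "(sw K L \<otimes> idm K) \<cdot> sw K (K \<oplus> L) = (idm L \<otimes> sw K K) \<cdot> sw (K \<oplus> K) L"
proof -
  have h1: "sw K (K \<oplus> L) = (idm K \<otimes> sw K L) \<cdot> (sw K K \<otimes> idm L)" by (rule H1)
  have h2: "sw (K \<oplus> K) L = (sw K L \<otimes> idm K) \<cdot> (idm K \<otimes> sw K L)" by (rule H2)
  have n: "sw (K \<oplus> K) L \<cdot> (sw K K \<otimes> idm L) = (idm L \<otimes> sw K K) \<cdot> sw (K \<oplus> K) L"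
    using swnat[of "sw K K" "idm L"] by simp
  have "(sw K L \<otimes> idm K) \<cdot> sw K (K \<oplus> L) = ((sw K L \<otimes> idm K) \<cdot> (idm K \<otimes> sw K L)) \<cdot> (sw K K \<otimes> idm L)"
    by (simp only: h1) (simp del: merge merge2)
  also have "\<dots> = sw (K \<oplus> K) L \<cdot> (sw K K \<otimes> idm L)" by (simp only: h2)
  finally show ?thesis using n by simp
qed

lemma E2: "(sw K L \<otimes> idm (K \<oplus> L)) \<cdot> (sw K (K \<oplus> L) \<otimes> idm L) = ((idm L \<otimes> sw K K) \<cdot> sw (K \<oplus> K) L) \<otimes> idm L"
proof -
  have "(sw K L \<otimes> idm (K \<oplus> L)) \<cdot> (sw K (K \<oplus> L) \<otimes> idm L) = ((sw K L \<otimes> idm K) \<cdot> sw K (K \<oplus> L)) \<otimes> idm L"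
    by (subst merge_split) auto
  thus ?thesis by (simp only: E3)
qed

lemma PI: "sw (K \<oplus> L) (L \<oplus> K) \<cdot> ((idm (K \<oplus> L) \<otimes> sw K L) \<cdot> (idm K \<otimes> sw K L \<otimes> idm L))
   = (idm L \<otimes> sw K K \<otimes> idm L) \<cdot> sw (K \<oplus> K \<oplus> L) L"
proof -
  have i: "sw (K \<oplus> L) (L \<oplus> K) \<cdot> (idm (K \<oplus> L) \<otimes> sw K L) = (sw K L \<otimes> idm (K \<oplus> L)) \<cdot> sw (K \<oplus> L) (K \<oplus> L)"
    using swnat[of "idm (K \<oplus> L)" "sw K L"] by simp
  have ix: "sw ((K \<oplus> K) \<oplus> L) L = (sw (K \<oplus> K) L \<otimes> idm L) \<cdot> (idm (K \<oplus> K) \<otimes> sw L L)" by (rule H2)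
  have x: "(idm L \<otimes> sw K K \<otimes> idm L) \<cdot> (sw (K \<oplus> K) L \<otimes> idm L) = ((idm L \<otimes> sw K K) \<cdot> sw (K \<oplus> K) L) \<otimes> idm L"
  proof -
    have "idm L \<otimes> sw K K \<otimes> idm L = (idm L \<otimes> sw K K) \<otimes> idm L" by (rule tassoc[symmetric]) auto
    hence "(idm L \<otimes> sw K K \<otimes> idm L) \<cdot> (sw (K \<oplus> K) L \<otimes> idm L) = ((idm L \<otimes> sw K K) \<otimes> idm L) \<cdot> (sw (K \<oplus> K) L \<otimes> idm L)" by (simp only:)
    also have "\<dots> = ((idm L \<otimes> sw K K) \<cdot> sw (K \<oplus> K) L) \<otimes> (idm L \<cdot> idm L)" by (rule merge) auto
    finally show ?thesis by simp
  qed
  have "sw (K \<oplus> L) (L \<oplus> K) \<cdot> ((idm (K \<oplus> L) \<otimes> sw K L) \<cdot> (idm K \<otimes> sw K L \<otimes> idm L))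
     = (sw K L \<otimes> idm (K \<oplus> L)) \<cdot> (sw (K \<oplus> L) (K \<oplus> L) \<cdot> (idm K \<otimes> sw K L \<otimes> idm L))"
  proof -
    have "sw (K \<oplus> L) (L \<oplus> K) \<cdot> ((idm (K \<oplus> L) \<otimes> sw K L) \<cdot> (idm K \<otimes> sw K L \<otimes> idm L))
      = (sw (K \<oplus> L) (L \<oplus> K) \<cdot> (idm (K \<oplus> L) \<otimes> sw K L)) \<cdot> (idm K \<otimes> sw K L \<otimes> idm L)"
      by (rule assoc[symmetric]) auto
    also have "\<dots> = ((sw K L \<otimes> idm (K \<oplus> L)) \<cdot> sw (K \<oplus> L) (K \<oplus> L)) \<cdot> (idm K \<otimes> sw K L \<otimes> idm L)" by (simp only: i)
    also have "\<dots> = (sw K L \<otimes> idm (K \<oplus> L)) \<cdot> (sw (K \<oplus> L) (K \<oplus> L) \<cdot> (idm K \<otimes> sw K L \<otimes> idm L))"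
      by (rule assoc) auto
    finally show ?thesis .
  qed
  also have "\<dots> = ((sw K L \<otimes> idm (K \<oplus> L)) \<cdot> (sw K (K \<oplus> L) \<otimes> idm L)) \<cdot> (idm (K \<oplus> K) \<otimes> sw L L)"
    by (simp only: E1) (simp del: merge merge2)
  also have "\<dots> = (((idm L \<otimes> sw K K) \<cdot> sw (K \<oplus> K) L) \<otimes> idm L) \<cdot> (idm (K \<oplus> K) \<otimes> sw L L)"
    by (simp only: E2)
  also have "\<dots> = ((idm L \<otimes> sw K K \<otimes> idm L) \<cdot> (sw (K \<oplus> K) L \<otimes> idm L)) \<cdot> (idm (K \<oplus> K) \<otimes> sw L L)"
    by (simp only: x)
  also have "\<dots> = (idm L \<otimes> sw K K \<otimes> idm L) \<cdot> ((sw (K \<oplus> K) L \<otimes> idm L) \<cdot> (idm (K \<oplus> K) \<otimes> sw L L))"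
    by (rule assoc) auto
  also have "\<dots> = (idm L \<otimes> sw K K \<otimes> idm L) \<cdot> sw (K \<oplus> K \<oplus> L) L"
    using ix by simp
  finally show ?thesis .
qed


lemma cond_ins:
  assumes g: "Arr g" "Dom g = K" "Cod g = X" and h: "Arr h" "Dom h = L" "Cod h = A"
    and v: "Arr v" "Dom v = U" "Cod v = K" and w: "Arr w" "Dom w = U" "Cod w = L"
  shows "(idm A \<otimes> (sw K X \<cdot> ((idm K \<otimes> g) \<cdot> (cp K \<cdot> v))) \<otimes> idm L) \<cdot> (sw L A \<cdot> ((idm L \<otimes> h) \<cdot> (cp L \<cdot> w)))
    = sw (K \<oplus> L) (A \<oplus> X) \<cdot> ((idm (K \<oplus> L) \<otimes> ((h \<otimes> g) \<cdot> sw K L)) \<cdot> (cp (K \<oplus> L) \<cdot> (v \<otimes> w)))"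
proof -
  let ?a = "(idm K \<otimes> g) \<cdot> (cp K \<cdot> v)" and ?b = "(idm L \<otimes> h) \<cdot> (cp L \<cdot> w)"
  let ?T = "(cp K \<cdot> v) \<otimes> (cp L \<cdot> w)"
  have a: "Arr ?a" "Dom ?a = U" "Cod ?a = K \<oplus> X" using g v by auto
  have b: "Arr ?b" "Dom ?b = U" "Cod ?b = L \<oplus> A" using h w by auto
  have T: "Arr ?T" "Dom ?T = U" "Cod ?T = K \<oplus> K \<oplus> L \<oplus> L" using v w by auto
  have L1: "(idm A \<otimes> (sw K X \<cdot> ?a) \<otimes> idm L) \<cdot> (sw L A \<cdot> ?b)
     = (idm A \<otimes> sw K X \<otimes> idm L) \<cdot> ((idm A \<otimes> ?a \<otimes> idm L) \<cdot> (sw L A \<cdot> ?b))"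
    using a b by simp
  have L2: "(idm A \<otimes> ?a \<otimes> idm L) \<cdot> (sw L A \<cdot> ?b) = sw (K \<oplus> X \<oplus> L) A \<cdot> (?a \<otimes> ?b)"
  proof -
    have n: "sw (K \<oplus> X \<oplus> L) A \<cdot> ((?a \<otimes> idm L) \<otimes> idm A) = (idm A \<otimes> (?a \<otimes> idm L)) \<cdot> sw L A"
      using swnat[of "?a \<otimes> idm L" "idm A"] a by simp
    have "(idm A \<otimes> ?a \<otimes> idm L) \<cdot> (sw L A \<cdot> ?b) = ((idm A \<otimes> ?a \<otimes> idm L) \<cdot> sw L A) \<cdot> ?b"
      by (rule assoc[symmetric]) (use a b in auto)
    also have "\<dots> = (sw (K \<oplus> X \<oplus> L) A \<cdot> ((?a \<otimes> idm L) \<otimes> idm A)) \<cdot> ?b" using n by simp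
    also have "\<dots> = sw (K \<oplus> X \<oplus> L) A \<cdot> (((?a \<otimes> idm L) \<otimes> idm A) \<cdot> ?b)"
      by (rule assoc) (use a b in auto)
    also have "((?a \<otimes> idm L) \<otimes> idm A) \<cdot> ?b = ?a \<otimes> ?b"
      using st_tn1[of ?a ?b "L \<oplus> A"] a b by simp
    finally show ?thesis .
  qed
  have L3: "?a \<otimes> ?b = (idm K \<otimes> g \<otimes> idm L \<otimes> h) \<cdot> ?T"
  proof -
    have "((idm K \<otimes> g) \<otimes> (idm L \<otimes> h)) \<cdot> ?T = ?a \<otimes> ?b" by (rule merge) (use g h v w in auto)
    moreover have "(idm K \<otimes> g) \<otimes> (idm L \<otimes> h) = idm K \<otimes> g \<otimes> idm L \<otimes> h" by (rule tassoc) (use g h in auto)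
    ultimately show ?thesis by simp
  qed
  have L4: "sw (K \<oplus> X \<oplus> L) A \<cdot> ((idm K \<otimes> g \<otimes> idm L \<otimes> h) \<cdot> ?T) = (h \<otimes> idm K \<otimes> g \<otimes> idm L) \<cdot> (sw (K \<oplus> K \<oplus> L) L \<cdot> ?T)"
  proof -
    have n: "sw (K \<oplus> X \<oplus> L) A \<cdot> ((idm K \<otimes> g \<otimes> idm L) \<otimes> h) = (h \<otimes> (idm K \<otimes> g \<otimes> idm L)) \<cdot> sw (K \<oplus> K \<oplus> L) L"
      using swnat[of "idm K \<otimes> g \<otimes> idm L" h] g h by simp
    show ?thesis using n g h T by (simp flip: assoc del: merge merge2)
  qed
  have L5: "(idm A \<otimes> sw K X \<otimes> idm L) \<cdot> (h \<otimes> idm K \<otimes> g \<otimes> idm L) = (h \<otimes> g \<otimes> idm (K \<oplus> L)) \<cdot> (idm L \<otimes> sw K K \<otimes> idm L)"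
  proof -
    have e1: "sw K X \<cdot> (idm K \<otimes> g) = (g \<otimes> idm K) \<cdot> sw K K" using swnat[of "idm K" g] g by simp
    have "(idm A \<otimes> sw K X \<otimes> idm L) \<cdot> (h \<otimes> idm K \<otimes> g \<otimes> idm L) = h \<otimes> ((sw K X \<otimes> idm L) \<cdot> ((idm K \<otimes> g) \<otimes> idm L))"
      using g h by (subst merge) auto
    also have "\<dots> = h \<otimes> ((sw K X \<cdot> (idm K \<otimes> g)) \<otimes> idm L)" using g by (subst merge) auto
    also have "\<dots> = h \<otimes> (((g \<otimes> idm K) \<cdot> sw K K) \<otimes> idm L)" by (simp only: e1)
    also have "\<dots> = (h \<otimes> g \<otimes> idm (K \<oplus> L)) \<cdot> (idm L \<otimes> sw K K \<otimes> idm L)"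
    proof -
      have "(h \<otimes> g \<otimes> idm (K \<oplus> L)) \<cdot> (idm L \<otimes> sw K K \<otimes> idm L) = h \<otimes> ((g \<otimes> idm (K \<oplus> L)) \<cdot> (sw K K \<otimes> idm L))"
        using g h by (subst merge) auto
      also have "(g \<otimes> idm (K \<oplus> L)) \<cdot> (sw K K \<otimes> idm L) = ((g \<otimes> idm K) \<cdot> sw K K) \<otimes> idm L"
        using g by (subst merge_split) auto
      finally show ?thesis by simp
    qed
    finally show ?thesis .
  qed
  have R1: "cp (K \<oplus> L) \<cdot> (v \<otimes> w) = (idm K \<otimes> sw K L \<otimes> idm L) \<cdot> ?T"
  proof -
    have "cp (K \<oplus> L) \<cdot> (v \<otimes> w) = (((idm K \<otimes> sw K L) \<otimes> idm L) \<cdot> (cp K \<otimes> cp L)) \<cdot> (v \<otimes> w)"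
      by (simp only: copy_tens)
    also have "\<dots> = ((idm K \<otimes> sw K L) \<otimes> idm L) \<cdot> ((cp K \<otimes> cp L) \<cdot> (v \<otimes> w))"
      by (rule assoc) (use v w in auto)
    also have "(cp K \<otimes> cp L) \<cdot> (v \<otimes> w) = ?T"
      by (rule merge) (use v w in auto)
    also have "(idm K \<otimes> sw K L) \<otimes> idm L = idm K \<otimes> sw K L \<otimes> idm L"
      by (rule tassoc) auto
    finally show ?thesis .
  qed
  have R4: "sw (K \<oplus> L) (A \<oplus> X) \<cdot> (idm (K \<oplus> L) \<otimes> (h \<otimes> g)) = (h \<otimes> g \<otimes> idm (K \<oplus> L)) \<cdot> sw (K \<oplus> L) (L \<oplus> K)"
    using swnat[of "idm (K \<oplus> L)" "h \<otimes> g"] g h by simp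
  have PI': "sw (K \<oplus> L) (L \<oplus> K) \<cdot> ((idm (K \<oplus> L) \<otimes> sw K L) \<cdot> ((idm K \<otimes> sw K L \<otimes> idm L) \<cdot> ?T))
     = (idm L \<otimes> sw K K \<otimes> idm L) \<cdot> (sw (K \<oplus> K \<oplus> L) L \<cdot> ?T)"
  proof -
    have "sw (K \<oplus> L) (L \<oplus> K) \<cdot> ((idm (K \<oplus> L) \<otimes> sw K L) \<cdot> ((idm K \<otimes> sw K L \<otimes> idm L) \<cdot> ?T))
      = (sw (K \<oplus> L) (L \<oplus> K) \<cdot> ((idm (K \<oplus> L) \<otimes> sw K L) \<cdot> (idm K \<otimes> sw K L \<otimes> idm L))) \<cdot> ?T"
      using T by (simp del: merge merge2)
    also have "\<dots> = ((idm L \<otimes> sw K K \<otimes> idm L) \<cdot> sw (K \<oplus> K \<oplus> L) L) \<cdot> ?T" by (simp only: PI)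
    also have "\<dots> = (idm L \<otimes> sw K K \<otimes> idm L) \<cdot> (sw (K \<oplus> K \<oplus> L) L \<cdot> ?T)"
      by (rule assoc) (use T in auto)
    finally show ?thesis .
  qed
  have LHS: "(idm A \<otimes> (sw K X \<cdot> ?a) \<otimes> idm L) \<cdot> (sw L A \<cdot> ?b)
      = (h \<otimes> g \<otimes> idm (K \<oplus> L)) \<cdot> ((idm L \<otimes> sw K K \<otimes> idm L) \<cdot> (sw (K \<oplus> K \<oplus> L) L \<cdot> ?T))"
  proof -
    have "(idm A \<otimes> (sw K X \<cdot> ?a) \<otimes> idm L) \<cdot> (sw L A \<cdot> ?b)
       = (idm A \<otimes> sw K X \<otimes> idm L) \<cdot> ((h \<otimes> idm K \<otimes> g \<otimes> idm L) \<cdot> (sw (K \<oplus> K \<oplus> L) L \<cdot> ?T))"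
      by (simp only: L1 L2 L3 L4)
    also have "\<dots> = ((idm A \<otimes> sw K X \<otimes> idm L) \<cdot> (h \<otimes> idm K \<otimes> g \<otimes> idm L)) \<cdot> (sw (K \<oplus> K \<oplus> L) L \<cdot> ?T)"
      by (rule assoc[symmetric]) (use g h T in auto)
    also have "\<dots> = ((h \<otimes> g \<otimes> idm (K \<oplus> L)) \<cdot> (idm L \<otimes> sw K K \<otimes> idm L)) \<cdot> (sw (K \<oplus> K \<oplus> L) L \<cdot> ?T)"
      by (simp only: L5)
    also have "\<dots> = (h \<otimes> g \<otimes> idm (K \<oplus> L)) \<cdot> ((idm L \<otimes> sw K K \<otimes> idm L) \<cdot> (sw (K \<oplus> K \<oplus> L) L \<cdot> ?T))"
      by (rule assoc) (use g h T in auto)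
    finally show ?thesis .
  qed
  have RHS: "sw (K \<oplus> L) (A \<oplus> X) \<cdot> ((idm (K \<oplus> L) \<otimes> ((h \<otimes> g) \<cdot> sw K L)) \<cdot> (cp (K \<oplus> L) \<cdot> (v \<otimes> w)))
      = (h \<otimes> g \<otimes> idm (K \<oplus> L)) \<cdot> ((idm L \<otimes> sw K K \<otimes> idm L) \<cdot> (sw (K \<oplus> K \<oplus> L) L \<cdot> ?T))"
  proof -
    have w1: "idm (K \<oplus> L) \<otimes> ((h \<otimes> g) \<cdot> sw K L) = (idm (K \<oplus> L) \<otimes> (h \<otimes> g)) \<cdot> (idm (K \<oplus> L) \<otimes> sw K L)"
      by (rule whiskL) (use g h in auto)
    have "sw (K \<oplus> L) (A \<oplus> X) \<cdot> ((idm (K \<oplus> L) \<otimes> ((h \<otimes> g) \<cdot> sw K L)) \<cdot> (cp (K \<oplus> L) \<cdot> (v \<otimes> w)))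
      = sw (K \<oplus> L) (A \<oplus> X) \<cdot> (((idm (K \<oplus> L) \<otimes> (h \<otimes> g)) \<cdot> (idm (K \<oplus> L) \<otimes> sw K L)) \<cdot> ((idm K \<otimes> sw K L \<otimes> idm L) \<cdot> ?T))"
      by (simp only: w1 R1)
    also have "\<dots> = (sw (K \<oplus> L) (A \<oplus> X) \<cdot> (idm (K \<oplus> L) \<otimes> (h \<otimes> g))) \<cdot> ((idm (K \<oplus> L) \<otimes> sw K L) \<cdot> ((idm K \<otimes> sw K L \<otimes> idm L) \<cdot> ?T))"
      using g h T by (simp del: merge merge2 tassoc tid tidL)
    also have "\<dots> = ((h \<otimes> g \<otimes> idm (K \<oplus> L)) \<cdot> sw (K \<oplus> L) (L \<oplus> K)) \<cdot> ((idm (K \<oplus> L) \<otimes> sw K L) \<cdot> ((idm K \<otimes> sw K L \<otimes> idm L) \<cdot> ?T))"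
      by (simp only: R4)
    also have "\<dots> = (h \<otimes> g \<otimes> idm (K \<oplus> L)) \<cdot> (sw (K \<oplus> L) (L \<oplus> K) \<cdot> ((idm (K \<oplus> L) \<otimes> sw K L) \<cdot> ((idm K \<otimes> sw K L \<otimes> idm L) \<cdot> ?T)))"
      by (rule assoc) (use g h T in auto)
    also have "\<dots> = (h \<otimes> g \<otimes> idm (K \<oplus> L)) \<cdot> ((idm L \<otimes> sw K K \<otimes> idm L) \<cdot> (sw (K \<oplus> K \<oplus> L) L \<cdot> ?T))"
      by (simp only: PI')
    finally show ?thesis .
  qed
  show ?thesis using LHS RHS by simp
qed


lemma get_cond2: "has_conditionals C \<Longrightarrow> Arr f \<Longrightarrow> Dom f = Y0 \<Longrightarrow> Cod f = X \<oplus> K \<Longrightarrow> \<exists>g. is_cond2 C Y0 X K f g"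
proof -
  assume hc: "has_conditionals C" and f: "Arr f" "Dom f = Y0" "Cod f = X \<oplus> K"
  have "hom C Y0 (X \<oplus> K) f" using f by (simp add: hom_def)
  thus ?thesis using hc unfolding has_conditionals_def by blast
qed

lemma sim_intro: "\<not> obs_fails C R1 \<Longrightarrow> \<not> obs_fails C R2 \<Longrightarrow>
  is_cond2 C U (otgt R1) (ores R1) (omor R1) Ga \<Longrightarrow> is_cond2 C U (otgt R2) (ores R2) (omor R2) Gb \<Longrightarrow>
  Ga \<cdot> oobs R1 = Gb \<cdot> oobs R2 \<Longrightarrow> state_sim C R1 R2"
  by (auto simp: state_sim_def)

lemma J_hom: "Arr x \<Longrightarrow> Dom x = U \<Longrightarrow> Cod x = X \<Longrightarrow> obs_hom C U X (obs_J C U X x)"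
  by (simp add: obs_J_def obs_hom_def hom_def deterministic_def)

lemma J_nf: "Arr x \<Longrightarrow> Dom x = U \<Longrightarrow> Cod x = X \<Longrightarrow> \<not> obs_fails C (obs_J C U X x)"
  by (simp add: obs_J_def obs_fails_def marg2_def abs_refl)

lemma part2:
  assumes ps: "precise_supports C" and hc: "has_conditionals C"
    and P: "obs_hom C U X P" and nf: "\<not> obs_fails C P" and gc: "is_cond2 C U X (ores P) (omor P) g"
  shows "obs_equiv C P (obs_J C U X (g \<cdot> oobs P))"
  unfolding obs_equiv_def
proof (intro allI impI)
  note p = obs_homD[OF P]
  let ?K = "ores P" and ?o = "oobs P" and ?p = "omor P"
  define v where "v = marg2 C X ?K ?p"
  have v: "Arr v" "Dom v = U" "Cod v = ?K" using p by (auto simp: v_def)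
  have g: "Arr g" "Dom g = ?K" "Cod g = X" and pe: "?p = sw ?K X \<cdot> ((idm ?K \<otimes> g) \<cdot> (cp ?K \<cdot> v))"
    using cond2_st[OF p(3,4) _ gc] p by (auto simp: v_def)
  let ?x = "g \<cdot> ?o"
  have x: "Arr ?x" "Dom ?x = U" "Cod ?x = X" using g p by auto
  let ?J = "obs_J C U X ?x"
  have J: "obs_hom C U X ?J" by (rule J_hom[OF x])
  fix A Q assume "obs_hom C U (A \<oplus> osrc P) Q"
  hence Q: "obs_hom C U A Q" using p by simp
  note q = obs_homD[OF Q]
  let ?L = "ores Q" and ?oq = "oobs Q" and ?q = "omor Q"
  show "state_sim C (obs_comp C (obs_tens C (obs_id C A) P) Q) (obs_comp C (obs_tens C (obs_id C A) ?J) Q)"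
  proof (cases "obs_fails C Q")
    case True
    thus ?thesis unfolding state_sim_def using COMPF[OF ps P Q] COMPF[OF ps J Q] by simp
  next
    case False
    define w where "w = marg2 C A ?L ?q"
    have w: "Arr w" "Dom w = U" "Cod w = ?L" unfolding w_def using q(3,4,5) by simp_all
    obtain h where hcd: "is_cond2 C U A ?L ?q h" using get_cond2[OF hc q(3,4,5)] by blast
    have hh: "Arr h \<and> Dom h = ?L \<and> Cod h = A \<and> ?q = sw ?L A \<cdot> ((idm ?L \<otimes> h) \<cdot> (cp ?L \<cdot> w))"
      unfolding w_def by (rule cond2_st[OF q(3,4,5) hcd])
    hence h: "Arr h" "Dom h = ?L" "Cod h = A" and qe: "?q = sw ?L A \<cdot> ((idm ?L \<otimes> h) \<cdot> (cp ?L \<cdot> w))"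
      by blast+
    let ?m1 = "(idm A \<otimes> ?p \<otimes> idm ?L) \<cdot> ?q" and ?m2 = "(idm A \<otimes> ?x \<otimes> idm ?L) \<cdot> ?q"
    have R1: "obs_comp C (obs_tens C (obs_id C A) P) Q = Obs U (A \<oplus> X) (?K \<oplus> ?L) ?m1 (?o \<otimes> ?oq)"
      by (rule comp_st[OF P Q])
    have R2: "obs_comp C (obs_tens C (obs_id C A) ?J) Q = Obs U (A \<oplus> X) ?L ?m2 ?oq"
      using comp_st[OF J Q] q by (simp add: obs_J_def)
    have M1: "marg2 C (A \<oplus> X) (?K \<oplus> ?L) ?m1 = v \<otimes> w"
      unfolding v_def w_def by (rule marg_ins) (use p q in auto)
    have M2: "marg2 C (A \<oplus> X) ?L ?m2 = w"
      using marg_ins[of ?x X U ?q A ?L] x q by (simp add: w_def marg2_def)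
    have E1: "?m1 = sw (?K \<oplus> ?L) (A \<oplus> X) \<cdot> ((idm (?K \<oplus> ?L) \<otimes> ((h \<otimes> g) \<cdot> sw ?K ?L)) \<cdot> (cp (?K \<oplus> ?L) \<cdot> (v \<otimes> w)))"
    proof -
      have "?m1 = (idm A \<otimes> (sw ?K X \<cdot> ((idm ?K \<otimes> g) \<cdot> (cp ?K \<cdot> v))) \<otimes> idm ?L) \<cdot> (sw ?L A \<cdot> ((idm ?L \<otimes> h) \<cdot> (cp ?L \<cdot> w)))"
        by (subst pe, subst qe, rule refl)
      also have "\<dots> = sw (?K \<oplus> ?L) (A \<oplus> X) \<cdot> ((idm (?K \<oplus> ?L) \<otimes> ((h \<otimes> g) \<cdot> sw ?K ?L)) \<cdot> (cp (?K \<oplus> ?L) \<cdot> (v \<otimes> w)))"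
        by (rule cond_ins[OF g h v w])
      finally show ?thesis .
    qed
    have E2: "?m2 = sw ?L (A \<oplus> X) \<cdot> ((idm ?L \<otimes> (h \<otimes> ?x)) \<cdot> (cp ?L \<cdot> w))"
    proof -
      have "?m2 = (idm A \<otimes> ?x \<otimes> idm ?L) \<cdot> (sw ?L A \<cdot> ((idm ?L \<otimes> h) \<cdot> (cp ?L \<cdot> w)))"
        by (subst qe, rule refl)
      also have "\<dots> = sw ?L (A \<oplus> X) \<cdot> ((idm ?L \<otimes> (h \<otimes> ?x)) \<cdot> (cp ?L \<cdot> w))"
        using cond_ins[OF x h id_ar(1) _ _ w, of U] x h w by simp
      finally show ?thesis .
    qed
    show ?thesis unfolding R1 R2
    proof (rule sim_intro[where Ga = "(h \<otimes> g) \<cdot> sw ?K ?L" and Gb = "h \<otimes> ?x"], simp_all only: obs.sel)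
      show "\<not> obs_fails C (Obs U (A \<oplus> X) (?K \<oplus> ?L) ?m1 (?o \<otimes> ?oq))"
        using COMPF[OF ps P Q] nf False R1 by simp
      show "\<not> obs_fails C (Obs U (A \<oplus> X) ?L ?m2 ?oq)"
        using COMPF[OF ps J Q] J_nf[OF x] False R2 by simp
      show "is_cond2 C U (A \<oplus> X) (?K \<oplus> ?L) ?m1 ((h \<otimes> g) \<cdot> sw ?K ?L)"
        unfolding is_cond2_def M1 using E1 g h v w by (simp add: hom_def)
      show "is_cond2 C U (A \<oplus> X) ?L ?m2 (h \<otimes> ?x)"
        unfolding is_cond2_def M2 using E2 x h w by (simp add: hom_def)
      show "((h \<otimes> g) \<cdot> sw ?K ?L) \<cdot> (?o \<otimes> ?oq) = (h \<otimes> ?x) \<cdot> ?oq"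
      proof -
        have "((h \<otimes> g) \<cdot> sw ?K ?L) \<cdot> (?o \<otimes> ?oq) = (h \<otimes> g) \<cdot> (?oq \<otimes> ?o)"
          using sw_st[of ?o ?oq] g h p q by simp
        also have "\<dots> = (h \<cdot> ?oq) \<otimes> ?x" using g h p q by simp
        also have "\<dots> = (h \<otimes> ?x) \<cdot> ?oq"
        proof -
          have mm: "(h \<otimes> ?x) \<cdot> (?oq \<otimes> idm U) = (h \<cdot> ?oq) \<otimes> (?x \<cdot> idm U)" by (rule merge) (use h x q in auto)
          thus ?thesis using h x q by simp
        qed
        finally show ?thesis .
      qed
    qed
  qed
qed


lemma idU_J: "obs_id C U = obs_J C U U (idm U)" by (simp add: obs_id_def obs_J_def)
lemma copyU: "obs_copy C U = obs_id C U" by (simp add: obs_copy_def obs_J_def obs_id_def)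
lemma delU: "obs_del C U = obs_id C U" by (simp add: obs_del_def obs_J_def obs_id_def)

lemma id_sel[simp]: "otgt (obs_id C X) = X" "osrc (obs_id C X) = X" by (simp_all add: obs_id_def)

lemma comp_idR: "obs_hom C U Y F \<Longrightarrow> obs_comp C F (obs_id C U) = F"
proof -
  assume F: "obs_hom C U Y F"
  note f = obs_homD[OF F]
  show ?thesis using f by (cases F) (simp add: obs_comp_def obs_id_def)
qed

lemma comp_idL: "obs_hom C U Y F \<Longrightarrow> obs_comp C (obs_id C Y) F = F"
proof -
  assume F: "obs_hom C U Y F"
  note f = obs_homD[OF F]
  show ?thesis using f by (cases F) (simp add: obs_comp_def obs_id_def)
qed

lemma idU_hom: "obs_hom C U U (obs_id C U)"
  by (simp add: obs_id_def obs_hom_def hom_def deterministic_def)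

lemma idU_nf: "\<not> obs_fails C (obs_id C U)"
  by (simp add: obs_id_def obs_fails_def marg2_def abs_refl)

lemma tens_idU: "obs_tens C (obs_id C U) (obs_id C U) = obs_id C U"
  by (simp add: obs_tens_def obs_id_def)

lemma part4:
  assumes ps: "precise_supports C" and hc: "has_conditionals C"
    and ex: "\<exists>M mu ob. hom C U M mu \<and> hom C U M ob \<and> deterministic C ob \<and> \<not> abscont C M ob mu"
  shows "\<exists>B. obs_hom C U U B \<and> obs_fails C B \<and>
          (\<forall>F. obs_hom C U U F \<longrightarrow> obs_equiv C F (obs_id C U) \<or> obs_equiv C F B) \<and>
          cond_copyable C (obs_id C U) \<and> cond_copyable C B \<and> \<not> cond_discardable C B"
proof -
  obtain M mu ob where m: "hom C U M mu" "hom C U M ob" "deterministic C ob" "\<not> abscont C M ob mu"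
    using ex by blast
  let ?B = "Obs U U M mu ob"
  have B: "obs_hom C U U ?B" using m by (simp add: obs_hom_def)
  have Bf: "obs_fails C ?B" using m by (simp add: obs_fails_def marg2_def hom_def)
  have all: "obs_equiv C F (obs_id C U) \<or> obs_equiv C F ?B" if F: "obs_hom C U U F" for F
  proof (cases "obs_fails C F")
    case True
    thus ?thesis using part1[OF ps F B True Bf] by simp
  next
    case False
    note f = obs_homD[OF F]
    obtain g where gc: "is_cond2 C U U (ores F) (omor F) g" using get_cond2[OF hc f(3,4,5)] by blast
    have g: "Arr g" "Dom g = ores F" "Cod g = U" using cond2_st[OF f(3,4,5) gc] by auto
    have "g \<cdot> oobs F = idm U" by (rule st_U) (use g f in auto)
    hence "obs_equiv C F (obs_id C U)" using part2[OF ps hc F False gc] by (simp add: idU_J)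
    thus ?thesis by simp
  qed
  have c1: "cond_copyable C (obs_id C U)"
    unfolding cond_copyable_def
    by (simp add: copyU comp_idL[OF idU_hom] tens_idU equiv_refl[OF hc idU_hom])
  have BB: "obs_hom C U U (obs_tens C ?B ?B)" using tens_obs_hom[OF B B] by simp
  have c2: "cond_copyable C ?B"
    unfolding cond_copyable_def using part1[OF ps B BB Bf] TENSF[OF ps B B] Bf
    by (simp add: copyU comp_idL[OF B] comp_idR[OF BB])
  have c3: "\<not> cond_discardable C ?B"
  proof
    assume "cond_discardable C ?B"
    hence e: "obs_equiv C ?B (obs_id C U)" by (simp add: cond_discardable_def delU comp_idL[OF B])
    have Q: "obs_hom C U (U \<oplus> osrc ?B) (obs_id C U)" using idU_hom by simp
    have "state_sim C (obs_comp C (obs_tens C (obs_id C U) ?B) (obs_id C U))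
                      (obs_comp C (obs_tens C (obs_id C U) (obs_id C U)) (obs_id C U))"
      using e Q unfolding obs_equiv_def by blast
    thus False unfolding state_sim_def
      using COMPF[OF ps B idU_hom] COMPF[OF ps idU_hom idU_hom] Bf idU_nf by simp
  qed
  show ?thesis using B Bf all c1 c2 c3 by blast
qed

end

theorem proposition5p12:
  fixes C :: "('o, 'm) mcat"
  assumes "markov_category C"
    and "has_conditionals C"
    and "precise_supports C"
    and "\<exists>M mu ob. hom C (c_unit C) M mu \<and> hom C (c_unit C) M ob \<and> deterministic C ob \<and>
                  \<not> abscont C M ob mu"
  shows
    "(\<forall>X P Q. obs_hom C (c_unit C) X P \<and> obs_hom C (c_unit C) X Q \<and>
               obs_fails C P \<and> obs_fails C Q \<longrightarrow> obs_equiv C P Q)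
   \<and> (\<forall>X P g. obs_hom C (c_unit C) X P \<and> \<not> obs_fails C P \<and>
               is_cond2 C (c_unit C) X (ores P) (omor P) g \<longrightarrow>
               obs_equiv C P (obs_J C (c_unit C) X (c_cmp C g (oobs P))))
   \<and> (\<forall>X Y P F. obs_hom C (c_unit C) X P \<and> obs_fails C P \<and> obs_hom C X Y F \<longrightarrow>
               is_failure C Y (obs_comp C F P))
   \<and> (\<forall>X Y P Q. obs_hom C (c_unit C) X P \<and> obs_fails C P \<and> obs_hom C (c_unit C) Y Q \<longrightarrow>
               is_failure C (c_otens C X Y) (obs_tens C P Q) \<and>
               is_failure C (c_otens C Y X) (obs_tens C Q P))
   \<and> (\<exists>B. obs_hom C (c_unit C) (c_unit C) B \<and> obs_fails C B \<and>
          (\<forall>F. obs_hom C (c_unit C) (c_unit C) F \<longrightarrow>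
               obs_equiv C F (obs_id C (c_unit C)) \<or> obs_equiv C F B) \<and>
          cond_copyable C (obs_id C (c_unit C)) \<and> cond_copyable C B \<and>
          \<not> cond_discardable C B)"
proof -
  interpret markov_category C by (rule assms(1))
  note ps = assms(3) and hc = assms(2)
  have fail_self: "is_failure C Y B" if "obs_hom C (c_unit C) Y B" "obs_fails C B" for Y B
    unfolding is_failure_def using that equiv_refl[OF hc that(1)] by blast
  show ?thesis
  proof (intro conjI allI impI)
    fix X P Q assume "obs_hom C (c_unit C) X P \<and> obs_hom C (c_unit C) X Q \<and> obs_fails C P \<and> obs_fails C Q"
    thus "obs_equiv C P Q" using part1[OF ps] by blast
  next
    fix X P g assume "obs_hom C (c_unit C) X P \<and> \<not> obs_fails C P \<and> is_cond2 C (c_unit C) X (ores P) (omor P) g"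
    thus "obs_equiv C P (obs_J C (c_unit C) X (c_cmp C g (oobs P)))" using part2[OF ps hc] by blast
  next
    fix X Y P F assume a: "obs_hom C (c_unit C) X P \<and> obs_fails C P \<and> obs_hom C X Y F"
    show "is_failure C Y (obs_comp C F P)"
      using a fail_self comp_obs_hom COMPF2[OF ps hc] by blast
  next
    fix X Y P Q assume a: "obs_hom C (c_unit C) X P \<and> obs_fails C P \<and> obs_hom C (c_unit C) Y Q"
    show "is_failure C (c_otens C X Y) (obs_tens C P Q)"
      using a fail_self tens_obs_hom TENSF[OF ps] by blast
    show "is_failure C (c_otens C Y X) (obs_tens C Q P)"
      using a fail_self tens_obs_hom TENSF[OF ps] by blast
  next
    show "\<exists>B. obs_hom C (c_unit C) (c_unit C) B \<and> obs_fails C B \<and>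
          (\<forall>F. obs_hom C (c_unit C) (c_unit C) F \<longrightarrow>
               obs_equiv C F (obs_id C (c_unit C)) \<or> obs_equiv C F B) \<and>
          cond_copyable C (obs_id C (c_unit C)) \<and> cond_copyable C B \<and>
          \<not> cond_discardable C B"
      by (rule part4[OF ps hc assms(4)])
  qed
qed

end
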